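(* Let $W$ be a group admitting an odd connected Coxeter system $(W,S)$ of rank at least $2$ whose graph $\mathcal V_{(W,S)}$ is a tree. If $w\in W$ is an involution, then its centraliser is $\operatorname{C}_W(w)=\langle w\rangle$.
   Context: A Coxeter system $(W,S)$ with $S=\{w_1,\dots,w_n\}$ means that $W$ has the presentation $\langle w_1,\dots,w_n \mid (w_iw_j)^{m_{ij}}=1\rangle$, where $m_{ii}=1$ and $m_{ij}=m_{ji}\in\{2,3,4,\dots\}\cup\{\infty\}$ for $i\neq j$ (no relation is imposed when $m_{ij}=\infty$). The numbers $m_{ij}$, $i\neq j$, are the exponents and $n$ is the rank. The system is odd if every exponent is odd or $\infty$. The graph $\mathcal V_{(W,S)}$ has vertex set $\{1,\dots,n\}$ and an edge between $i\neq j$ iff $m_{ij}<\infty$; the system is connected if $\mathcal V_{(W,S)}$ is connected. *)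

theory Defs
  imports "HOL-Algebra.Algebra" "HOL-Library.Extended_Nat"
begin

text \<open>Words in the free group on generators indexed by naturals: a letter (i,False) stands for
  the generator i, a letter (i,True) for its inverse.\<close>

primrec word_eval :: "('a, 'b) monoid_scheme \<Rightarrow> (nat \<Rightarrow> 'a) \<Rightarrow> (nat \<times> bool) list \<Rightarrow> 'a" where
  "word_eval G g [] = \<one>\<^bsub>G\<^esub>"
| "word_eval G g (x # xs) =
     (if snd x then inv\<^bsub>G\<^esub> (g (fst x)) else g (fst x)) \<otimes>\<^bsub>G\<^esub> word_eval G g xs"

text \<open>Equivalence of words modulo the normal closure of the relators R in the free group
  on the generators in I (the congruence generated by free reductions and relators).\<close>

inductive pres_eq :: "nat set \<Rightarrow> (nat \<times> bool) list set \<Rightarrow> (nat \<times> bool) list \<Rightarrow> (nat \<times> bool) list \<Rightarrow> bool"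
  for I R where
  refl: "pres_eq I R u u"
| sym: "pres_eq I R u v \<Longrightarrow> pres_eq I R v u"
| trans: "pres_eq I R u v \<Longrightarrow> pres_eq I R v w \<Longrightarrow> pres_eq I R u w"
| relator: "r \<in> R \<Longrightarrow> pres_eq I R (u @ r @ v) (u @ v)"
| free_red: "i \<in> I \<Longrightarrow> pres_eq I R (u @ [(i, b), (i, \<not> b)] @ v) (u @ v)"

definition has_presentation ::
  "('a, 'b) monoid_scheme \<Rightarrow> nat set \<Rightarrow> (nat \<Rightarrow> 'a) \<Rightarrow> (nat \<times> bool) list set \<Rightarrow> bool" where
  "has_presentation G I g R \<longleftrightarrow>
     group G \<and> (\<forall>i\<in>I. g i \<in> carrier G) \<and>
     (\<forall>r\<in>R. set r \<subseteq> I \<times> UNIV) \<and>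
     carrier G = word_eval G g ` {u. set u \<subseteq> I \<times> UNIV} \<and>
     (\<forall>u v. set u \<subseteq> I \<times> UNIV \<longrightarrow> set v \<subseteq> I \<times> UNIV \<longrightarrow>
        (word_eval G g u = word_eval G g v \<longleftrightarrow> pres_eq I R u v))"

definition coxeter_matrix :: "nat \<Rightarrow> (nat \<Rightarrow> nat \<Rightarrow> enat) \<Rightarrow> bool" where
  "coxeter_matrix n m \<longleftrightarrow>
     (\<forall>i\<in>{1..n}. m i i = 1) \<and>
     (\<forall>i\<in>{1..n}. \<forall>j\<in>{1..n}. m i j = m j i) \<and>
     (\<forall>i\<in>{1..n}. \<forall>j\<in>{1..n}. i \<noteq> j \<longrightarrow> m i j \<ge> 2)"

definition coxeter_relators :: "nat \<Rightarrow> (nat \<Rightarrow> nat \<Rightarrow> enat) \<Rightarrow> (nat \<times> bool) list set" where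
  "coxeter_relators n m =
     {concat (replicate k [(i, False), (j, False)]) | i j k.
        i \<in> {1..n} \<and> j \<in> {1..n} \<and> m i j = enat k}"

definition coxeter_system ::
  "('a, 'b) monoid_scheme \<Rightarrow> nat \<Rightarrow> (nat \<Rightarrow> 'a) \<Rightarrow> (nat \<Rightarrow> nat \<Rightarrow> enat) \<Rightarrow> bool" where
  "coxeter_system W n g m \<longleftrightarrow>
     coxeter_matrix n m \<and> has_presentation W {1..n} g (coxeter_relators n m)"

definition odd_coxeter :: "nat \<Rightarrow> (nat \<Rightarrow> nat \<Rightarrow> enat) \<Rightarrow> bool" where
  "odd_coxeter n m \<longleftrightarrow>
     (\<forall>i\<in>{1..n}. \<forall>j\<in>{1..n}. i \<noteq> j \<longrightarrow> m i j = \<infinity> \<or> (\<exists>k. m i j = enat k \<and> odd k))"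

text \<open>The graph V_(W,S): vertices 1..n, edge between i \<noteq> j iff m i j < \<infinity>.\<close>

definition cox_adj :: "nat \<Rightarrow> (nat \<Rightarrow> nat \<Rightarrow> enat) \<Rightarrow> nat \<Rightarrow> nat \<Rightarrow> bool" where
  "cox_adj n m i j \<longleftrightarrow> i \<in> {1..n} \<and> j \<in> {1..n} \<and> i \<noteq> j \<and> m i j < \<infinity>"

definition cox_connected :: "nat \<Rightarrow> (nat \<Rightarrow> nat \<Rightarrow> enat) \<Rightarrow> bool" where
  "cox_connected n m \<longleftrightarrow> (\<forall>i\<in>{1..n}. \<forall>j\<in>{1..n}. (cox_adj n m)\<^sup>*\<^sup>* i j)"

definition cox_has_cycle :: "nat \<Rightarrow> (nat \<Rightarrow> nat \<Rightarrow> enat) \<Rightarrow> bool" where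
  "cox_has_cycle n m \<longleftrightarrow>
     (\<exists>vs. length vs \<ge> 3 \<and> distinct vs \<and>
        (\<forall>k < length vs. cox_adj n m (vs ! k) (vs ! ((k + 1) mod length vs))))"

definition cox_tree :: "nat \<Rightarrow> (nat \<Rightarrow> nat \<Rightarrow> enat) \<Rightarrow> bool" where
  "cox_tree n m \<longleftrightarrow> cox_connected n m \<and> \<not> cox_has_cycle n m"

definition centraliser :: "('a, 'b) monoid_scheme \<Rightarrow> 'a \<Rightarrow> 'a set" where
  "centraliser G w = {x \<in> carrier G. x \<otimes>\<^bsub>G\<^esub> w = w \<otimes>\<^bsub>G\<^esub> x}"

end

theory Submission
  imports Defs
begin


lemma word_eval_closed:
  assumes "group G" "\<forall>x\<in>set u. g (fst x) \<in> carrier G"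
  shows "word_eval G g u \<in> carrier G"
  using assms(2)
proof (induction u)
  case Nil then show ?case using assms(1) by (simp add: group.is_monoid monoid.one_closed)
next
  case (Cons x u)
  interpret group G by fact
  show ?case using Cons by auto
qed

lemma word_eval_append:
  assumes "group G" "\<forall>x\<in>set u. g (fst x) \<in> carrier G" "\<forall>x\<in>set v. g (fst x) \<in> carrier G"
  shows "word_eval G g (u @ v) = word_eval G g u \<otimes>\<^bsub>G\<^esub> word_eval G g v"
  using assms(2)
proof (induction u)
  case Nil then show ?case using word_eval_closed[OF assms(1) assms(3)] assms(1) by (simp add: group.is_monoid monoid.l_one)
next
  case (Cons x u)
  interpret group G by fact
  have c1: "word_eval G g u \<in> carrier G" "word_eval G g v \<in> carrier G"
    using Cons(2) assms(3) word_eval_closed[OF assms(1)] by auto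
  show ?case using Cons c1 by (auto simp: m_assoc)
qed

lemma word_eval_sub:
  assumes "set u \<subseteq> I \<times> UNIV" "\<forall>i\<in>I. g i \<in> carrier G"
  shows "\<forall>x\<in>set u. g (fst x) \<in> carrier G"
  using assms by auto

fun act_word :: "(nat \<Rightarrow> 'y \<Rightarrow> 'y) \<Rightarrow> (nat \<times> bool) list \<Rightarrow> 'y \<Rightarrow> 'y" where
  "act_word f [] y = y"
| "act_word f (x # xs) y = f (fst x) (act_word f xs y)"

lemma act_word_append: "act_word f (u @ v) y = act_word f u (act_word f v y)"
  by (induction u) auto

lemma act_word_closed:
  assumes "\<And>i y. y \<in> Y \<Longrightarrow> f i y \<in> Y" "y \<in> Y"
  shows "act_word f u y \<in> Y"
  using assms by (induction u) auto

lemma pres_eq_act: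
  assumes cl: "\<And>i y. y \<in> Y \<Longrightarrow> f i y \<in> Y"
    and inv: "\<And>i y. i \<in> I \<Longrightarrow> y \<in> Y \<Longrightarrow> f i (f i y) = y"
    and rel: "\<And>r y. r \<in> R \<Longrightarrow> y \<in> Y \<Longrightarrow> act_word f r y = y"
  shows "pres_eq I R u v \<Longrightarrow> y \<in> Y \<Longrightarrow> act_word f u y = act_word f v y"
proof (induction arbitrary: y rule: pres_eq.induct)
  case (relator r u v)
  have "act_word f v y \<in> Y" using act_word_closed[OF cl relator(2)] .
  then show ?case using rel[OF relator(1)] by (simp add: act_word_append)
next
  case (free_red i u b v)
  have "act_word f v y \<in> Y" using act_word_closed[OF cl free_red(2)] .
  then show ?case using inv[OF free_red(1)] by (simp add: act_word_append)
qed auto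

definition Phi :: "('a,'b) monoid_scheme \<Rightarrow> nat set \<Rightarrow> (nat \<Rightarrow> 'a) \<Rightarrow> (nat \<Rightarrow> 'y \<Rightarrow> 'y) \<Rightarrow> 'a \<Rightarrow> 'y \<Rightarrow> 'y" where
  "Phi G I g f x = act_word f (SOME u. set u \<subseteq> I \<times> UNIV \<and> word_eval G g u = x)"

locale act_setup =
  fixes G :: "('a,'b) monoid_scheme" and I g R and Y :: "'y set" and f :: "nat \<Rightarrow> 'y \<Rightarrow> 'y"
  assumes pres: "has_presentation G I g R"
    and cl: "\<And>i y. y \<in> Y \<Longrightarrow> f i y \<in> Y"
    and inv: "\<And>i y. i \<in> I \<Longrightarrow> y \<in> Y \<Longrightarrow> f i (f i y) = y"
    and rel: "\<And>r y. r \<in> R \<Longrightarrow> y \<in> Y \<Longrightarrow> act_word f r y = y"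
begin

lemma grp: "group G" using pres unfolding has_presentation_def by (rule conjunct1)
lemma gen: "\<And>i. i \<in> I \<Longrightarrow> g i \<in> carrier G"
proof -
  fix i assume "i \<in> I"
  moreover have "\<forall>i\<in>I. g i \<in> carrier G" using pres unfolding has_presentation_def by (elim conjE)
  ultimately show "g i \<in> carrier G" by (rule bspec[rotated])
qed

lemma carrier_words: "x \<in> carrier G \<Longrightarrow> \<exists>u. set u \<subseteq> I \<times> UNIV \<and> x = word_eval G g u"
proof -
  assume "x \<in> carrier G"
  moreover have "carrier G = word_eval G g ` {u. set u \<subseteq> I \<times> UNIV}"
    using pres unfolding has_presentation_def by (elim conjE)
  ultimately show ?thesis by auto
qed

lemma pres_iff: "set u \<subseteq> I \<times> UNIV \<Longrightarrow> set v \<subseteq> I \<times> UNIV \<Longrightarrow>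
   word_eval G g u = word_eval G g v \<longleftrightarrow> pres_eq I R u v"
  using pres unfolding has_presentation_def by (elim conjE) (rule allE, assumption, erule allE, erule impE, assumption, erule impE, assumption, assumption)

lemma Phi_eval:
  assumes "set u \<subseteq> I \<times> UNIV" "y \<in> Y"
  shows "Phi G I g f (word_eval G g u) y = act_word f u y"
proof -
  let ?P = "\<lambda>w. set w \<subseteq> I \<times> UNIV \<and> word_eval G g w = word_eval G g u"
  have "?P (SOME w. ?P w)" by (rule someI[of ?P u]) (use assms in auto)
  then have "pres_eq I R (SOME w. ?P w) u" using pres_iff assms by blast
  then show ?thesis unfolding Phi_def using pres_eq_act[OF cl inv rel] assms(2) by blast
qed

lemma Phi_closed: assumes "x \<in> carrier G" "y \<in> Y" shows "Phi G I g f x y \<in> Y"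
proof -
  obtain u where u: "set u \<subseteq> I \<times> UNIV" "x = word_eval G g u" using carrier_words assms(1) by blast
  show ?thesis unfolding u(2) Phi_eval[OF u(1) assms(2)] by (rule act_word_closed[OF cl assms(2)])
qed

lemma Phi_mult:
  assumes "x \<in> carrier G" "z \<in> carrier G" "y \<in> Y"
  shows "Phi G I g f (x \<otimes>\<^bsub>G\<^esub> z) y = Phi G I g f x (Phi G I g f z y)"
proof -
  obtain u where u: "set u \<subseteq> I \<times> UNIV" "x = word_eval G g u" using carrier_words assms(1) by blast
  obtain v where v: "set v \<subseteq> I \<times> UNIV" "z = word_eval G g v" using carrier_words assms(2) by blast
  have cu: "\<forall>x\<in>set u. g (fst x) \<in> carrier G" "\<forall>x\<in>set v. g (fst x) \<in> carrier G"
    using u(1) v(1) gen by auto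
  have e: "x \<otimes>\<^bsub>G\<^esub> z = word_eval G g (u @ v)"
    unfolding u(2) v(2) by (rule word_eval_append[OF grp cu, symmetric])
  have s: "set (u@v) \<subseteq> I \<times> UNIV" using u v by auto
  have y2: "act_word f v y \<in> Y" by (rule act_word_closed[OF cl assms(3)])
  have "Phi G I g f (x \<otimes>\<^bsub>G\<^esub> z) y = act_word f (u@v) y" using e Phi_eval[OF s assms(3)] by simp
  also have "\<dots> = act_word f u (act_word f v y)" by (rule act_word_append)
  also have "\<dots> = Phi G I g f x (Phi G I g f z y)"
    using Phi_eval[OF v(1) assms(3)] Phi_eval[OF u(1) y2] u(2) v(2) by simp
  finally show ?thesis .
qed

end


definition adjI :: "nat set \<Rightarrow> (nat \<Rightarrow> nat \<Rightarrow> enat) \<Rightarrow> nat \<Rightarrow> nat \<Rightarrow> bool" where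
  "adjI I m i j \<longleftrightarrow> i \<in> I \<and> j \<in> I \<and> i \<noteq> j \<and> m i j < \<infinity>"
definition connI :: "nat set \<Rightarrow> (nat \<Rightarrow> nat \<Rightarrow> enat) \<Rightarrow> bool" where
  "connI I m \<longleftrightarrow> (\<forall>i\<in>I. \<forall>j\<in>I. (adjI I m)\<^sup>*\<^sup>* i j)"
definition cycI :: "nat set \<Rightarrow> (nat \<Rightarrow> nat \<Rightarrow> enat) \<Rightarrow> bool" where
  "cycI I m \<longleftrightarrow>
     (\<exists>vs. length vs \<ge> 3 \<and> distinct vs \<and>
        (\<forall>k < length vs. adjI I m (vs ! k) (vs ! ((k + 1) mod length vs))))"
definition matI :: "nat set \<Rightarrow> (nat \<Rightarrow> nat \<Rightarrow> enat) \<Rightarrow> bool" where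
  "matI I m \<longleftrightarrow>
     (\<forall>i\<in>I. m i i = 1) \<and>
     (\<forall>i\<in>I. \<forall>j\<in>I. m i j = m j i) \<and>
     (\<forall>i\<in>I. \<forall>j\<in>I. i \<noteq> j \<longrightarrow> m i j \<ge> 2)"
definition oddI :: "nat set \<Rightarrow> (nat \<Rightarrow> nat \<Rightarrow> enat) \<Rightarrow> bool" where
  "oddI I m \<longleftrightarrow>
     (\<forall>i\<in>I. \<forall>j\<in>I. i \<noteq> j \<longrightarrow> m i j = \<infinity> \<or> (\<exists>k. m i j = enat k \<and> odd k))"
definition relI :: "nat set \<Rightarrow> (nat \<Rightarrow> nat \<Rightarrow> enat) \<Rightarrow> (nat \<times> bool) list set" where
  "relI I m =
     {concat (replicate k [(i, False), (j, False)]) | i j k.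
        i \<in> I \<and> j \<in> I \<and> m i j = enat k}"

lemma pres_eq_mono:
  assumes "I \<subseteq> J" "R \<subseteq> S"
  shows "pres_eq I R x y \<Longrightarrow> pres_eq J S x y"
proof (induction rule: pres_eq.induct)
  case (relator r u v) then show ?case using assms pres_eq.relator by blast
next
  case (free_red i u b v) then show ?case using assms pres_eq.free_red by blast
qed (auto intro: pres_eq.intros)

lemma rep_uu:
  assumes "u \<in> I" "m u u = 1"
  shows "pres_eq I (relI I m) (x @ concat (replicate k [(u,False),(u,False)]) @ y) (x @ y)"
proof (induction k)
  case 0 then show ?case by (simp add: pres_eq.refl)
next
  case (Suc k)
  have e1: "[(u,False),(u,False)] = concat (replicate 1 [(u,False),(u,False)])" by simp
  have e2: "m u u = enat 1" using assms(2) by (simp add: one_enat_def)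
  have r: "[(u,False),(u,False)] \<in> relI I m" unfolding relI_def using assms(1) e1 e2 by blast
  have "pres_eq I (relI I m) (x @ [(u,False),(u,False)] @ (concat (replicate k [(u,False),(u,False)]) @ y))
      (x @ (concat (replicate k [(u,False),(u,False)]) @ y))"
    by (rule pres_eq.relator[OF r])
  then show ?case using Suc by (auto intro: pres_eq.trans)
qed

definition sig :: "nat \<Rightarrow> nat \<Rightarrow> nat \<times> bool \<Rightarrow> nat \<times> bool" where
  "sig v u x = (if fst x = v then (u, snd x) else x)"

lemma map_sig_id: "set w \<subseteq> (I - {v}) \<times> UNIV \<Longrightarrow> map (sig v u) w = w"
  by (induction w) (auto simp: sig_def)

lemma map_sig_rep: "map (sig v u) (concat (replicate k [(i,b),(j,c)])) =
   concat (replicate k [(if i = v then u else i, b), (if j = v then u else j, c)])"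
  by (induction k) (auto simp: sig_def)

lemma pres_eq_subst:
  assumes mat: "matI I m" and vI: "v \<in> I" and uI: "u \<in> I" "u \<noteq> v"
    and leaf: "\<forall>j\<in>I. j \<noteq> v \<longrightarrow> j \<noteq> u \<longrightarrow> m v j = \<infinity>"
  shows "pres_eq I (relI I m) x y \<Longrightarrow> pres_eq (I - {v}) (relI (I - {v}) m) (map (sig v u) x) (map (sig v u) y)"
proof (induction rule: pres_eq.induct)
  case (refl u) then show ?case by (rule pres_eq.refl)
next
  case (sym a b) show ?case using sym.IH by (rule pres_eq.sym)
next
  case (trans a b c) show ?case using trans.IH by (rule pres_eq.trans)
next
  case (relator r x y)
  obtain i j k where r: "r = concat (replicate k [(i, False), (j, False)])" "i \<in> I" "j \<in> I" "m i j = enat k"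
    using relator unfolding relI_def by blast
  let ?i = "if i = v then u else i" and ?j = "if j = v then u else j"
  have mr: "map (sig v u) r = concat (replicate k [(?i,False),(?j,False)])"
    unfolding r(1) by (rule map_sig_rep)
  have iI: "?i \<in> I - {v}" "?j \<in> I - {v}" using r uI by auto
  have muu: "m u u = 1" using mat uI unfolding matI_def by blast
  have sym: "m v u = m u v" using mat uI vI unfolding matI_def by blast
  show ?case
  proof (cases "i = v \<or> j = v")
    case False
    then have "map (sig v u) r \<in> relI (I - {v}) m" unfolding mr relI_def using iI r by auto
    then show ?thesis using pres_eq.relator by simp
  next
    case True
    have "j = u \<or> j = v" if "i = v"
    proof (rule ccontr)
      assume "\<not> (j = u \<or> j = v)"
      then have "m v j = \<infinity>" using leaf r(3) by blast
      then show False using r(4) that by simp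
    qed
    moreover have "i = u \<or> i = v" if "j = v"
    proof (rule ccontr)
      assume "\<not> (i = u \<or> i = v)"
      then have "m v i = \<infinity>" using leaf r(2) by blast
      moreover have "m i j = m j i" using mat r(2,3) unfolding matI_def by blast
      ultimately show False using r(4) that by simp
    qed
    ultimately have "?i = u" "?j = u" using True by auto
    then have "map (sig v u) r = concat (replicate k [(u,False),(u,False)])" using mr by simp
    then show ?thesis using rep_uu[OF iI(1)[unfolded \<open>?i = u\<close>], of m] muu by simp
  qed
next
  case (free_red i x b y)
  let ?i = "if i = v then u else i"
  have "?i \<in> I - {v}" using free_red uI by auto
  moreover have "map (sig v u) (x @ [(i, b), (i, \<not> b)] @ y) = map (sig v u) x @ [(?i, b), (?i, \<not> b)] @ map (sig v u) y"
    by (simp add: sig_def)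
  ultimately show ?case using pres_eq.free_red by simp
qed

definition invw :: "(nat \<times> bool) list \<Rightarrow> (nat \<times> bool) list" where
  "invw w = rev (map (\<lambda>x. (fst x, \<not> snd x)) w)"

lemma word_eval_invw:
  assumes "group G" "\<forall>x\<in>set w. g (fst x) \<in> carrier G"
  shows "word_eval G g (invw w) = inv\<^bsub>G\<^esub> (word_eval G g w)"
  using assms(2)
proof (induction w)
  case Nil
  interpret group G by fact
  show ?case by (simp add: invw_def)
next
  case (Cons x w)
  interpret group G by fact
  have gx: "g (fst x) \<in> carrier G" using Cons by auto
  have cw: "word_eval G g w \<in> carrier G" using word_eval_closed[OF assms(1)] Cons(2) by auto
  have ci: "\<forall>y\<in>set (invw w). g (fst y) \<in> carrier G" using Cons(2) by (auto simp: invw_def)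
  have "invw (x # w) = invw w @ [(fst x, \<not> snd x)]" by (simp add: invw_def)
  then have "word_eval G g (invw (x # w)) = word_eval G g (invw w) \<otimes>\<^bsub>G\<^esub> word_eval G g [(fst x, \<not> snd x)]"
    using word_eval_append[OF assms(1) ci] gx by simp
  also have "\<dots> = inv\<^bsub>G\<^esub> (word_eval G g w) \<otimes>\<^bsub>G\<^esub> ((if \<not> snd x then inv\<^bsub>G\<^esub> (g (fst x)) else g (fst x)))"
    using Cons gx by simp
  also have "\<dots> = inv\<^bsub>G\<^esub> ((if snd x then inv\<^bsub>G\<^esub> (g (fst x)) else g (fst x)) \<otimes>\<^bsub>G\<^esub> word_eval G g w)"
    using gx cw by (simp add: inv_mult_group)
  finally show ?case by simp
qed

lemma word_eval_single: "group G \<Longrightarrow> g i \<in> carrier G \<Longrightarrow> word_eval G g [(i,False)] = g i"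
  by (simp add: group.is_monoid monoid.r_one)

lemma words_subgroup:
  assumes "group G" "\<forall>i\<in>J. g i \<in> carrier G"
  shows "subgroup (word_eval G g ` {w. set w \<subseteq> J \<times> UNIV}) G"
proof -
  interpret group G by fact
  have sub: "\<forall>x\<in>set w. g (fst x) \<in> carrier G" if "set w \<subseteq> J \<times> UNIV" for w
    using that assms(2) by auto
  show ?thesis
  proof (rule subgroupI)
    show "word_eval G g ` {w. set w \<subseteq> J \<times> UNIV} \<subseteq> carrier G"
      using word_eval_closed[OF assms(1)] sub by blast
    have "[] \<in> {w. set w \<subseteq> J \<times> UNIV}" by simp
    then show "word_eval G g ` {w. set w \<subseteq> J \<times> UNIV} \<noteq> {}" by blast
  next
    fix a assume "a \<in> word_eval G g ` {w. set w \<subseteq> J \<times> UNIV}"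
    then obtain w where w: "set w \<subseteq> J \<times> UNIV" "a = word_eval G g w" by blast
    have "inv\<^bsub>G\<^esub> a = word_eval G g (invw w)" using word_eval_invw[OF assms(1) sub[OF w(1)]] w(2) by simp
    moreover have "set (invw w) \<subseteq> J \<times> UNIV" using w(1) by (auto simp: invw_def)
    ultimately show "inv\<^bsub>G\<^esub> a \<in> word_eval G g ` {w. set w \<subseteq> J \<times> UNIV}" by blast
  next
    fix a b assume "a \<in> word_eval G g ` {w. set w \<subseteq> J \<times> UNIV}" "b \<in> word_eval G g ` {w. set w \<subseteq> J \<times> UNIV}"
    then obtain w v where w: "set w \<subseteq> J \<times> UNIV" "a = word_eval G g w" "set v \<subseteq> J \<times> UNIV" "b = word_eval G g v" by blast
    have "a \<otimes>\<^bsub>G\<^esub> b = word_eval G g (w @ v)" using word_eval_append[OF assms(1) sub[OF w(1)] sub[OF w(3)]] w by simp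
    moreover have "set (w @ v) \<subseteq> J \<times> UNIV" using w by auto
    ultimately show "a \<otimes>\<^bsub>G\<^esub> b \<in> word_eval G g ` {w. set w \<subseteq> J \<times> UNIV}" by blast
  qed
qed

lemma word_eval_sub_eq:
  assumes "group G" "\<forall>i\<in>J. g i \<in> carrier G" "set w \<subseteq> J \<times> UNIV"
  shows "word_eval (G\<lparr>carrier := word_eval G g ` {w. set w \<subseteq> J \<times> UNIV}\<rparr>) g w = word_eval G g w"
  using assms(3)
proof (induction w)
  case Nil then show ?case by simp
next
  case (Cons x w)
  let ?H = "word_eval G g ` {w. set w \<subseteq> J \<times> UNIV}"
  have xJ: "fst x \<in> J" using Cons by auto
  have "g (fst x) = word_eval G g [(fst x, False)]" using word_eval_single[OF assms(1)] assms(2) xJ by simp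
  moreover have "set [(fst x, False)] \<subseteq> J \<times> UNIV" using xJ by auto
  ultimately have "g (fst x) \<in> ?H" by blast
  then have "inv\<^bsub>G\<lparr>carrier := ?H\<rparr>\<^esub> (g (fst x)) = inv\<^bsub>G\<^esub> (g (fst x))"
    using group.m_inv_consistent[OF assms(1) words_subgroup[OF assms(1,2)]] by blast
  then show ?case using Cons by simp
qed


lemma hp_group: "has_presentation G I g R \<Longrightarrow> group G"
  unfolding has_presentation_def by (rule conjunct1)
lemma hp_gen: "has_presentation G I g R \<Longrightarrow> i \<in> I \<Longrightarrow> g i \<in> carrier G"
proof -
  assume a: "has_presentation G I g R" "i \<in> I"
  have "\<forall>i\<in>I. g i \<in> carrier G" using a(1) unfolding has_presentation_def by (elim conjE)
  then show ?thesis using a(2) by blast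
qed
lemma hp_carrier: "has_presentation G I g R \<Longrightarrow> carrier G = word_eval G g ` {u. set u \<subseteq> I \<times> UNIV}"
  unfolding has_presentation_def by (elim conjE)
lemma hp_rel: "has_presentation G I g R \<Longrightarrow> r \<in> R \<Longrightarrow> set r \<subseteq> I \<times> UNIV"
proof -
  assume a: "has_presentation G I g R" "r \<in> R"
  have "\<forall>r\<in>R. set r \<subseteq> I \<times> UNIV" using a(1) unfolding has_presentation_def by (elim conjE)
  then show ?thesis using a(2) by blast
qed
lemma hp_iff: "has_presentation G I g R \<Longrightarrow> set u \<subseteq> I \<times> UNIV \<Longrightarrow> set v \<subseteq> I \<times> UNIV \<Longrightarrow>
   word_eval G g u = word_eval G g v \<longleftrightarrow> pres_eq I R u v"
  unfolding has_presentation_def by (elim conjE) (rule allE, assumption, erule allE, erule impE, assumption, erule impE, assumption, assumption)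

lemma hp_intro:
  assumes "group G" "\<forall>i\<in>I. g i \<in> carrier G" "\<forall>r\<in>R. set r \<subseteq> I \<times> UNIV"
    "carrier G = word_eval G g ` {u. set u \<subseteq> I \<times> UNIV}"
    "\<And>u v. set u \<subseteq> I \<times> UNIV \<Longrightarrow> set v \<subseteq> I \<times> UNIV \<Longrightarrow>
        word_eval G g u = word_eval G g v \<longleftrightarrow> pres_eq I R u v"
  shows "has_presentation G I g R"
  unfolding has_presentation_def using assms by blast

lemma hp_words_gen: "has_presentation G I g R \<Longrightarrow> set u \<subseteq> I \<times> UNIV \<Longrightarrow> \<forall>x\<in>set u. g (fst x) \<in> carrier G"
  using hp_gen by fastforce

lemma relI_mono: "I \<subseteq> J \<Longrightarrow> relI I m \<subseteq> relI J m"
  unfolding relI_def by blast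

lemma restrict_pres:
  assumes pres: "has_presentation W I g (relI I m)" and mat: "matI I m"
    and vI: "v \<in> I" and uI: "u \<in> I" "u \<noteq> v"
    and leaf: "\<forall>j\<in>I. j \<noteq> v \<longrightarrow> j \<noteq> u \<longrightarrow> m v j = \<infinity>"
  shows "has_presentation (W\<lparr>carrier := word_eval W g ` {w. set w \<subseteq> (I-{v}) \<times> UNIV}\<rparr>) (I-{v}) g (relI (I-{v}) m)"
proof -
  let ?J = "I - {v}"
  let ?H = "word_eval W g ` {w. set w \<subseteq> ?J \<times> UNIV}"
  let ?A = "W\<lparr>carrier := ?H\<rparr>"
  have grp: "group W" by (rule hp_group[OF pres])
  have genJ: "\<forall>i\<in>?J. g i \<in> carrier W" using hp_gen[OF pres] by blast
  have sg: "subgroup ?H W" by (rule words_subgroup[OF grp genJ])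
  have g1: "group ?A" by (rule group.subgroup_imp_group[OF grp sg])
  have g2: "\<forall>i\<in>?J. g i \<in> carrier ?A"
  proof
    fix i assume i: "i \<in> ?J"
    have "g i = word_eval W g [(i,False)]" using word_eval_single[OF grp] genJ i by simp
    moreover have "[(i,False)] \<in> {w. set w \<subseteq> ?J \<times> UNIV}" using i by simp
    ultimately have "g i \<in> ?H" by (rule image_eqI)
    then show "g i \<in> carrier ?A" by simp
  qed
  have g3: "\<forall>r\<in>relI ?J m. set r \<subseteq> ?J \<times> UNIV"
  proof
    fix r assume "r \<in> relI ?J m"
    then obtain i j k where "r = concat (replicate k [(i, False), (j, False)])" "i \<in> ?J" "j \<in> ?J"
      unfolding relI_def by blast
    then show "set r \<subseteq> ?J \<times> UNIV" by (induction k arbitrary: r) auto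
  qed
  have ev: "word_eval ?A g w = word_eval W g w" if "set w \<subseteq> ?J \<times> UNIV" for w
    by (rule word_eval_sub_eq[OF grp genJ that])
  have g4: "carrier ?A = word_eval ?A g ` {u. set u \<subseteq> ?J \<times> UNIV}"
    using ev by (auto simp: image_def)
  have g5: "word_eval ?A g x = word_eval ?A g y \<longleftrightarrow> pres_eq ?J (relI ?J m) x y"
    if xy: "set x \<subseteq> ?J \<times> UNIV" "set y \<subseteq> ?J \<times> UNIV" for x y
  proof -
    have xyI: "set x \<subseteq> I \<times> UNIV" "set y \<subseteq> I \<times> UNIV" using xy by auto
    have "word_eval ?A g x = word_eval ?A g y \<longleftrightarrow> pres_eq I (relI I m) x y"
      using ev[OF xy(1)] ev[OF xy(2)] hp_iff[OF pres xyI] by simp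
    also have "\<dots> \<longleftrightarrow> pres_eq ?J (relI ?J m) x y"
    proof
      assume "pres_eq I (relI I m) x y"
      then have "pres_eq ?J (relI ?J m) (map (sig v u) x) (map (sig v u) y)"
        by (rule pres_eq_subst[OF mat vI uI leaf])
      then show "pres_eq ?J (relI ?J m) x y" using map_sig_id[OF xy(1)] map_sig_id[OF xy(2)] by simp
    next
      assume "pres_eq ?J (relI ?J m) x y"
      moreover have "relI ?J m \<subseteq> relI I m" by (rule relI_mono) auto
      ultimately show "pres_eq I (relI I m) x y" using pres_eq_mono[of ?J I "relI ?J m" "relI I m"] by blast
    qed
    finally show ?thesis .
  qed
  show ?thesis by (rule hp_intro[OF g1 g2 g3 g4 g5])
qed

lemma rel_eval_one:
  assumes pres: "has_presentation W I g R" and r: "r \<in> R"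
  shows "word_eval W g r = \<one>\<^bsub>W\<^esub>"
proof -
  have "pres_eq I R ([] @ r @ []) ([] @ [])" by (rule pres_eq.relator[OF r])
  then have "pres_eq I R r []" by simp
  moreover have "set r \<subseteq> I \<times> UNIV" by (rule hp_rel[OF pres r])
  ultimately have "word_eval W g r = word_eval W g []" using hp_iff[OF pres, of r "[]"] by simp
  then show ?thesis by simp
qed

lemma word_eval_rep:
  assumes "group G" "g i \<in> carrier G" "g j \<in> carrier G"
  shows "word_eval G g (concat (replicate k [(i,False),(j,False)])) = (g i \<otimes>\<^bsub>G\<^esub> g j) [^]\<^bsub>G\<^esub> k"
proof (induction k)
  case 0 then show ?case by simp
next
  case (Suc k)
  interpret group G by fact
  have c: "g i \<otimes>\<^bsub>G\<^esub> g j \<in> carrier G" using assms by simp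
  have "word_eval G g (concat (replicate (Suc k) [(i,False),(j,False)])) =
     g i \<otimes>\<^bsub>G\<^esub> (g j \<otimes>\<^bsub>G\<^esub> (g i \<otimes>\<^bsub>G\<^esub> g j) [^]\<^bsub>G\<^esub> k)" using Suc by simp
  also have "\<dots> = (g i \<otimes>\<^bsub>G\<^esub> g j) \<otimes>\<^bsub>G\<^esub> (g i \<otimes>\<^bsub>G\<^esub> g j) [^]\<^bsub>G\<^esub> k"
    using assms c by (simp add: m_assoc)
  also have "\<dots> = (g i \<otimes>\<^bsub>G\<^esub> g j) [^]\<^bsub>G\<^esub> Suc k" using c by (simp add: nat_pow_Suc2[symmetric])
  finally show ?case .
qed

lemma cox_rel:
  assumes pres: "has_presentation W I g (relI I m)" "i \<in> I" "j \<in> I" "m i j = enat k"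
  shows "(g i \<otimes>\<^bsub>W\<^esub> g j) [^]\<^bsub>W\<^esub> k = \<one>\<^bsub>W\<^esub>"
proof -
  have "concat (replicate k [(i,False),(j,False)]) \<in> relI I m" unfolding relI_def using assms by blast
  then have "word_eval W g (concat (replicate k [(i,False),(j,False)])) = \<one>\<^bsub>W\<^esub>" by (rule rel_eval_one[OF pres(1)])
  then show ?thesis using word_eval_rep[OF hp_group[OF pres(1)] hp_gen[OF pres(1) assms(2)] hp_gen[OF pres(1) assms(3)]]
    by simp
qed

lemma cox_inv:
  assumes pres: "has_presentation W I g (relI I m)" "matI I m" "i \<in> I"
  shows "g i \<otimes>\<^bsub>W\<^esub> g i = \<one>\<^bsub>W\<^esub>"
proof -
  have "m i i = enat 1" using assms unfolding matI_def by (simp add: one_enat_def)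
  then have "(g i \<otimes>\<^bsub>W\<^esub> g i) [^]\<^bsub>W\<^esub> (1::nat) = \<one>\<^bsub>W\<^esub>" using cox_rel[OF pres(1) assms(3) assms(3)] by blast
  then show ?thesis using hp_group[OF pres(1)] hp_gen[OF pres(1) assms(3)]
    by (simp add: group.is_monoid monoid.nat_pow_eone monoid.m_closed)
qed


lemma adj_sym: assumes "matI I m" "adjI I m i j" shows "adjI I m j i"
proof -
  have "\<forall>i\<in>I. \<forall>j\<in>I. m i j = m j i" using assms(1) unfolding matI_def by (elim conjE)
  then show ?thesis using assms(2) unfolding adjI_def by auto
qed

definition isPath :: "nat set \<Rightarrow> (nat \<Rightarrow> nat \<Rightarrow> enat) \<Rightarrow> nat list \<Rightarrow> bool" where
  "isPath I m vs \<longleftrightarrow> vs \<noteq> [] \<and> distinct vs \<and> set vs \<subseteq> I \<and>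
     (\<forall>k. Suc k < length vs \<longrightarrow> adjI I m (vs!k) (vs!Suc k))"

lemma leaf_exists:
  assumes fin: "finite I" and c2: "card I \<ge> 2" and conn: "connI I m" and nc: "\<not> cycI I m" and mat: "matI I m"
  shows "\<exists>v u. v \<in> I \<and> u \<in> I \<and> u \<noteq> v \<and> m v u < \<infinity> \<and> (\<forall>j\<in>I. j \<noteq> v \<longrightarrow> j \<noteq> u \<longrightarrow> m v j = \<infinity>)"
proof -
  let ?S = "{vs. isPath I m vs}"
  have finS: "finite ?S"
    by (rule finite_subset[OF _ finite_subset_distinct[OF fin]]) (auto simp: isPath_def)
  obtain i j where ij: "i \<in> I" "j \<in> I" "i \<noteq> j"
  proof -
    have "I \<noteq> {}" using c2 by auto
    then obtain i where i: "i \<in> I" by blast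
    have "card (I - {i}) \<ge> 1" using c2 i fin by simp
    then have "I - {i} \<noteq> {}" by (intro notI) simp
    then obtain j where "j \<in> I - {i}" by blast
    then show ?thesis using that i by blast
  qed
  have "(adjI I m)\<^sup>*\<^sup>* i j" using conn ij unfolding connI_def by blast
  then obtain k where k: "adjI I m i k" using ij(3) by (metis converse_rtranclpE)
  have p2: "isPath I m [i,k]" using k unfolding isPath_def adjI_def by auto
  let ?L = "Max (length ` ?S)"
  have ne: "length ` ?S \<noteq> {}" using p2 by blast
  have "?L \<in> length ` ?S" using Max_in[OF finite_imageI[OF finS] ne] .
  then obtain vs where vs: "isPath I m vs" "length vs = ?L" by auto
  have maxl: "length ws \<le> length vs" if "isPath I m ws" for ws
    using vs(2) Max_ge[OF finite_imageI[OF finS]] that by auto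
  have n2: "length vs \<ge> 2" using maxl[OF p2] by simp
  define n where "n = length vs"
  define v where "v = vs ! (n - 1)"
  define u where "u = vs ! (n - 2)"
  have e1: "Suc (n - 2) < length vs" "Suc (n - 2) = n - 1" using n2 unfolding n_def by auto
  have "\<forall>k. Suc k < length vs \<longrightarrow> adjI I m (vs!k) (vs!Suc k)" using vs(1) unfolding isPath_def by (elim conjE)
  then have "adjI I m (vs!(n-2)) (vs!Suc (n-2))" using e1(1) by blast
  then have adjuv: "adjI I m u v" unfolding u_def v_def e1(2) .
  then have adjvu: "adjI I m v u" using adj_sym[OF mat] by blast
  have main: "m v j = \<infinity>" if j: "j \<in> I" "j \<noteq> v" "j \<noteq> u" for j
  proof (rule ccontr)
    assume "m v j \<noteq> \<infinity>"
    then have avj: "adjI I m v j" unfolding adjI_def using j adjvu by (auto simp: adjI_def)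
    show False
    proof (cases "j \<in> set vs")
      case False
      have "isPath I m (vs @ [j])" unfolding isPath_def
      proof (intro conjI allI impI)
        show "distinct (vs @ [j])" using vs(1) False unfolding isPath_def by simp
        show "set (vs @ [j]) \<subseteq> I" using vs(1) j unfolding isPath_def by simp
        fix k assume k: "Suc k < length (vs @ [j])"
        show "adjI I m ((vs @ [j]) ! k) ((vs @ [j]) ! Suc k)"
        proof (cases "Suc k < length vs")
          case True then show ?thesis using vs(1) unfolding isPath_def by (simp add: nth_append)
        next
          case False
          then have "k = n - 1" "Suc k = n" using k n2 unfolding n_def by auto
          then show ?thesis using avj unfolding v_def n_def by (simp add: nth_append)
        qed
      qed simp
      then show False using maxl by fastforce
    next
      case True
      then obtain p where p: "p < n" "vs ! p = j" unfolding n_def by (metis in_set_conv_nth)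
      have "p \<noteq> n - 1" using p j(2) unfolding v_def by blast
      moreover have "p \<noteq> n - 2" using p j(3) unfolding u_def by blast
      ultimately have p3: "p + 3 \<le> n" using p(1) n2 by linarith
      define cs where "cs = drop p vs"
      have lcs: "length cs = n - p" unfolding cs_def n_def by simp
      have "cycI I m" unfolding cycI_def
      proof (intro exI conjI allI impI)
        show "3 \<le> length cs" using lcs p3 by simp
        show "distinct cs" using vs(1) unfolding cs_def isPath_def by simp
        fix k assume k: "k < length cs"
        show "adjI I m (cs ! k) (cs ! ((k + 1) mod length cs))"
        proof (cases "Suc k < length cs")
          case True
          then have "(k+1) mod length cs = Suc k" by simp
          moreover have "Suc (p + k) < length vs" using True lcs unfolding n_def by simp
          ultimately show ?thesis using vs(1) unfolding isPath_def cs_def using p(1) n_def by auto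
        next
          case False
          then have kk: "k = n - p - 1" using k lcs by simp
          then have "k + 1 = length cs" using lcs p3 by simp
          then have "(k+1) mod length cs = 0" by simp
          moreover have "cs ! k = v" unfolding cs_def v_def kk using p3 n_def by simp
          moreover have "cs ! 0 = j" unfolding cs_def using p n_def by simp
          ultimately show ?thesis using avj by simp
        qed
      qed
      then show False using nc by blast
    qed
  qed
  show ?thesis
    apply (rule exI[of _ v], rule exI[of _ u])
    using adjvu main unfolding adjI_def by auto
qed

lemma conn_restrict:
  assumes conn: "connI I m" and mat: "matI I m" and vI: "v \<in> I"
    and uniq: "\<forall>j. adjI I m v j \<longrightarrow> j = u"
  shows "connI (I - {v}) m"
proof -
  have adjsym: "adjI I m a b \<Longrightarrow> adjI I m b a" for a b using adj_sym[OF mat] .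
  have step: "(adjI I m)\<^sup>*\<^sup>* i j \<Longrightarrow> i \<in> I - {v} \<Longrightarrow>
      (j \<noteq> v \<longrightarrow> (adjI (I - {v}) m)\<^sup>*\<^sup>* i j) \<and> (j = v \<longrightarrow> (adjI (I - {v}) m)\<^sup>*\<^sup>* i u)" for i j
  proof (induction rule: rtranclp_induct)
    case base then show ?case by auto
  next
    case (step k j)
    show ?case
    proof (cases "k = v")
      case False
      then have ik: "(adjI (I - {v}) m)\<^sup>*\<^sup>* i k" using step by blast
      show ?thesis
      proof (intro conjI impI)
        assume "j \<noteq> v"
        then have "adjI (I - {v}) m k j" using step(2) False unfolding adjI_def by auto
        then show "(adjI (I - {v}) m)\<^sup>*\<^sup>* i j" using ik by auto
      next
        assume "j = v"
        then have "k = u" using uniq adjsym step(2) by blast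
        then show "(adjI (I - {v}) m)\<^sup>*\<^sup>* i u" using ik by simp
      qed
    next
      case True
      then have iu: "(adjI (I - {v}) m)\<^sup>*\<^sup>* i u" using step by blast
      have "j = u" using uniq step(2) True by blast
      moreover have "j \<noteq> v" using step(2) True unfolding adjI_def by auto
      ultimately show ?thesis using iu by auto
    qed
  qed
  show ?thesis unfolding connI_def
  proof (intro ballI)
    fix i j assume "i \<in> I - {v}" "j \<in> I - {v}"
    moreover have "(adjI I m)\<^sup>*\<^sup>* i j" using conn calculation unfolding connI_def by blast
    ultimately show "(adjI (I - {v}) m)\<^sup>*\<^sup>* i j" using step by blast
  qed
qed

lemma cyc_restrict: "\<not> cycI I m \<Longrightarrow> J \<subseteq> I \<Longrightarrow> \<not> cycI J m"
  unfolding cycI_def adjI_def by blast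

lemma mat_restrict: "matI I m \<Longrightarrow> J \<subseteq> I \<Longrightarrow> matI J m"
  unfolding matI_def by blast

lemma odd_restrict: "oddI I m \<Longrightarrow> J \<subseteq> I \<Longrightarrow> oddI J m"
  unfolding oddI_def by blast


locale amalg = group W for W :: "('a, 'b) monoid_scheme" (structure) +
  fixes A D :: "'a set" and c :: 'a
  assumes subA: "subgroup A W" and subD: "subgroup D W"
    and cA: "c \<in> A" and cD: "c \<in> D" and cc: "c \<otimes> c = \<one>" and c1: "c \<noteq> \<one>"
begin

definition CC where "CC = {\<one>, c}"
definition car :: "bool \<Rightarrow> 'a set" where "car t = (if t then A else D)"
definition cpow :: "bool \<Rightarrow> 'a" where "cpow e = (if e then c else \<one>)"
definition rep :: "'a \<Rightarrow> 'a" where "rep a = (if a \<in> CC then \<one> else (SOME x. x \<in> {a, c \<otimes> a}))"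
definition sg :: "'a \<Rightarrow> bool" where "sg a = (if a \<in> CC then a \<noteq> \<one> else a \<noteq> rep a)"
definition okl :: "(bool \<times> 'a) list \<Rightarrow> bool" where
  "okl xs \<longleftrightarrow> successively (\<lambda>x y. fst x \<noteq> fst y) xs \<and>
     (\<forall>x\<in>set xs. snd x \<in> car (fst x) \<and> snd x \<notin> CC \<and> rep (snd x) = snd x)"
definition XS :: "(bool \<times> (bool \<times> 'a) list) set" where "XS = {x. okl (snd x)}"
definition Yt :: "bool \<Rightarrow> (bool \<times> 'a) list set" where
  "Yt t = {ys. okl ys \<and> (ys \<noteq> [] \<longrightarrow> fst (hd ys) \<noteq> t)}"
definition decomp :: "bool \<Rightarrow> bool \<times> (bool \<times> 'a) list \<Rightarrow> 'a \<times> (bool \<times> 'a) list" where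
  "decomp t x = (case snd x of [] \<Rightarrow> (cpow (fst x), [])
      | y # ys \<Rightarrow> (if fst y = t then (cpow (fst x) \<otimes> snd y, ys) else (cpow (fst x), snd x)))"
definition compose :: "bool \<Rightarrow> 'a \<Rightarrow> (bool \<times> 'a) list \<Rightarrow> bool \<times> (bool \<times> 'a) list" where
  "compose t a ys = (sg a, if a \<in> CC then ys else (t, rep a) # ys)"
definition act :: "bool \<Rightarrow> 'a \<Rightarrow> bool \<times> (bool \<times> 'a) list \<Rightarrow> bool \<times> (bool \<times> 'a) list" where
  "act t a x = compose t (a \<otimes> fst (decomp t x)) (snd (decomp t x))"
definition prodl :: "(bool \<times> 'a) list \<Rightarrow> 'a" where
  "prodl xs = foldr (\<lambda>y acc. snd y \<otimes> acc) xs \<one>"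
definition evalX :: "bool \<times> (bool \<times> 'a) list \<Rightarrow> 'a" where
  "evalX x = cpow (fst x) \<otimes> prodl (snd x)"

lemma cC: "c \<in> carrier W" using subgroup.subset[OF subA] cA by (rule subsetD)
lemma car_sub: "subgroup (car t) W" unfolding car_def using subA subD by simp
lemma car_carrier: "a \<in> car t \<Longrightarrow> a \<in> carrier W" using subgroup.subset[OF car_sub] by (rule subsetD)
lemma c_car: "c \<in> car t" unfolding car_def using cA cD by simp
lemma one_car: "\<one> \<in> car t" by (rule subgroup.one_closed[OF car_sub])
lemma mult_car: "a \<in> car t \<Longrightarrow> b \<in> car t \<Longrightarrow> a \<otimes> b \<in> car t"
  by (rule subgroup.m_closed[OF car_sub])
lemma inv_car: "a \<in> car t \<Longrightarrow> inv a \<in> car t"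
  by (rule subgroup.m_inv_closed[OF car_sub])
lemma cpow_car: "cpow e \<in> car t" unfolding cpow_def using c_car one_car by simp
lemma cpow_C: "cpow e \<in> carrier W" unfolding cpow_def using cC by simp
lemma cpow_CC: "cpow e \<in> CC" unfolding cpow_def CC_def by simp
lemma CC_carrier: "z \<in> CC \<Longrightarrow> z \<in> carrier W" unfolding CC_def using cC by auto
lemma CC_car: "z \<in> CC \<Longrightarrow> z \<in> car t" unfolding CC_def using c_car one_car by auto
lemma cpow_neg: "c \<otimes> cpow e = cpow (\<not> e)" unfolding cpow_def using cc cC by simp
lemma cpow_eq: "cpow e = cpow e' \<longleftrightarrow> e = e'" unfolding cpow_def using c1 by auto
lemma cpow_sg: "z \<in> CC \<Longrightarrow> cpow (sg z) = z" unfolding cpow_def sg_def CC_def by auto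
lemma sg_cpow: "sg (cpow e) = e" unfolding cpow_def sg_def CC_def using c1 by auto
lemma cc_cancel: "a \<in> carrier W \<Longrightarrow> c \<otimes> (c \<otimes> a) = a"
  using cC cc by (simp add: m_assoc[symmetric])

lemma CC_mult_iff: assumes "z \<in> CC" "a \<in> carrier W" shows "z \<otimes> a \<in> CC \<longleftrightarrow> a \<in> CC"
proof (cases "z = \<one>")
  case True then show ?thesis using assms by simp
next
  case False
  then have z: "z = c" using assms unfolding CC_def by simp
  have "c \<otimes> a \<in> CC \<longleftrightarrow> a \<in> CC"
  proof
    assume h: "c \<otimes> a \<in> CC"
    have a: "a = c \<otimes> (c \<otimes> a)" using cc_cancel[OF assms(2)] by simp
    show "a \<in> CC"
    proof (cases "c \<otimes> a = \<one>")
      case True then have "a = c" using a cC by simp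
      then show ?thesis unfolding CC_def by simp
    next
      case False then have "c \<otimes> a = c" using h unfolding CC_def by simp
      then have "a = \<one>" using a cc by simp
      then show ?thesis unfolding CC_def by simp
    qed
  next
    assume "a \<in> CC"
    then have "a = \<one> \<or> a = c" unfolding CC_def by simp
    then show "c \<otimes> a \<in> CC"
    proof
      assume "a = \<one>" then show ?thesis using cC unfolding CC_def by simp
    next
      assume "a = c" then show ?thesis using cc unfolding CC_def by simp
    qed
  qed
  then show ?thesis unfolding z .
qed

lemma rep_in: assumes "a \<notin> CC" shows "rep a \<in> {a, c \<otimes> a}"
  unfolding rep_def using assms someI[of "\<lambda>x. x \<in> {a, c \<otimes> a}" a] by simp

lemma rep_c: assumes "a \<notin> CC" "a \<in> carrier W" shows "rep (c \<otimes> a) = rep a"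
proof -
  have n: "c \<otimes> a \<notin> CC" using CC_mult_iff[of c a] assms unfolding CC_def by auto
  have "{c \<otimes> a, c \<otimes> (c \<otimes> a)} = {a, c \<otimes> a}" using cc_cancel[OF assms(2)] by auto
  then show ?thesis unfolding rep_def using n assms(1) by simp
qed

lemma rep_cpow: assumes "a \<notin> CC" "a \<in> carrier W" shows "rep (cpow e \<otimes> a) = rep a"
  using rep_c[OF assms] assms unfolding cpow_def by auto

lemma rep_car: assumes "a \<in> car t" shows "rep a \<in> car t"
proof (cases "a \<in> CC")
  case True then show ?thesis unfolding rep_def using one_car by simp
next
  case False
  then have "rep a \<in> {a, c \<otimes> a}" by (rule rep_in)
  then show ?thesis using assms c_car mult_car by auto
qed

lemma rep_carrier: "a \<in> carrier W \<Longrightarrow> rep a \<in> carrier W"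
proof (cases "a \<in> CC")
  case True then show ?thesis unfolding rep_def by simp
next
  case False
  assume "a \<in> carrier W"
  moreover have "rep a \<in> {a, c \<otimes> a}" using False by (rule rep_in)
  ultimately show ?thesis using cC by auto
qed

lemma rep_notCC: assumes "a \<notin> CC" "a \<in> carrier W" shows "rep a \<notin> CC"
proof -
  have "rep a \<in> {a, c \<otimes> a}" using assms(1) by (rule rep_in)
  moreover have "c \<otimes> a \<notin> CC" using CC_mult_iff[of c a] assms unfolding CC_def by auto
  ultimately show ?thesis using assms by auto
qed

lemma rep_rep: assumes "a \<notin> CC" "a \<in> carrier W" shows "rep (rep a) = rep a"
proof -
  have "rep a \<in> {a, c \<otimes> a}" using assms(1) by (rule rep_in)
  then show ?thesis using rep_c[OF assms] by auto
qed

lemma decomp_rep: assumes "a \<in> carrier W" shows "cpow (sg a) \<otimes> rep a = a"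
proof (cases "a \<in> CC")
  case True
  then show ?thesis unfolding sg_def rep_def cpow_def CC_def using cC by auto
next
  case False
  have "rep a \<in> {a, c \<otimes> a}" using False by (rule rep_in)
  then show ?thesis
  proof
    assume "rep a = a" then show ?thesis unfolding sg_def cpow_def using False assms by simp
  next
    assume r: "rep a \<in> {c \<otimes> a}"
    then have "rep a = c \<otimes> a" by simp
    moreover have "c \<otimes> a \<noteq> a"
    proof
      assume "c \<otimes> a = a"
      then have "c \<otimes> a = \<one> \<otimes> a" using assms by simp
      then show False using c1 r_cancel[of a c \<one>] cC assms by simp
    qed
    ultimately show ?thesis unfolding sg_def cpow_def using False assms cc_cancel by simp
  qed
qed

lemma sg_cpow_r: assumes "r \<notin> CC" "r \<in> carrier W" "rep r = r" shows "sg (cpow e \<otimes> r) = e"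
proof -
  have n: "cpow e \<otimes> r \<notin> CC" using CC_mult_iff[OF cpow_CC assms(2)] assms by simp
  have "rep (cpow e \<otimes> r) = r" using rep_cpow[OF assms(1,2)] assms(3) by simp
  moreover have "cpow e \<otimes> r \<noteq> r \<longleftrightarrow> e"
  proof
    assume "cpow e \<otimes> r \<noteq> r" then show e unfolding cpow_def using assms by (cases e) auto
  next
    assume e
    show "cpow e \<otimes> r \<noteq> r"
    proof
      assume "cpow e \<otimes> r = r"
      then have "c \<otimes> r = \<one> \<otimes> r" using \<open>e\<close> assms unfolding cpow_def by simp
      then show False using c1 r_cancel[of r c \<one>] cC assms by simp
    qed
  qed
  ultimately show ?thesis unfolding sg_def using n by simp
qed

lemma okl_Cons: "okl (y # ys) \<longleftrightarrow> okl ys \<and> (ys \<noteq> [] \<longrightarrow> fst y \<noteq> fst (hd ys)) \<and>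
    snd y \<in> car (fst y) \<and> snd y \<notin> CC \<and> rep (snd y) = snd y"
  unfolding okl_def successively_Cons by auto

lemma K1: assumes "x \<in> XS" shows "fst (decomp t x) \<in> car t" "snd (decomp t x) \<in> Yt t"
proof -
  obtain e xs where x: "x = (e, xs)" by (cases x)
  have ok: "okl xs" using assms x unfolding XS_def by simp
  have "fst (decomp t x) \<in> car t \<and> snd (decomp t x) \<in> Yt t"
  proof (cases xs)
    case Nil then show ?thesis unfolding decomp_def x Yt_def using cpow_car by (simp add: okl_def)
  next
    case (Cons y ys)
    show ?thesis
    proof (cases "fst y = t")
      case True
      then have "snd y \<in> car t" using ok Cons okl_Cons by blast
      then have "cpow e \<otimes> snd y \<in> car t" using cpow_car mult_car by blast
      moreover have "ys \<in> Yt t"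
      proof -
        have o2: "okl (y # ys)" using ok Cons by simp
        then have "okl ys \<and> (ys \<noteq> [] \<longrightarrow> fst y \<noteq> fst (hd ys))" by (simp add: okl_Cons)
        then show ?thesis unfolding Yt_def using True by auto
      qed
      ultimately show ?thesis unfolding decomp_def x using Cons True by simp
    next
      case False
      then show ?thesis unfolding decomp_def x Yt_def using Cons ok cpow_car by simp
    qed
  qed
  then show "fst (decomp t x) \<in> car t" "snd (decomp t x) \<in> Yt t" by auto
qed

lemma K2: assumes "x \<in> XS" shows "compose t (fst (decomp t x)) (snd (decomp t x)) = x"
proof -
  obtain e xs where x: "x = (e, xs)" by (cases x)
  have ok: "okl xs" using assms x unfolding XS_def by simp
  show ?thesis
  proof (cases "xs \<noteq> [] \<and> fst (hd xs) = t")
    case True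
    then obtain y ys where Cons: "xs = y # ys" "fst y = t" by (cases xs) auto
    have y: "snd y \<in> car t" "snd y \<notin> CC" "rep (snd y) = snd y" using ok Cons okl_Cons by auto
    have yc: "snd y \<in> carrier W" using y car_carrier by blast
    have n: "cpow e \<otimes> snd y \<notin> CC" using CC_mult_iff[OF cpow_CC yc] y by simp
    have "rep (cpow e \<otimes> snd y) = snd y" using rep_cpow[OF y(2) yc] y(3) by simp
    moreover have "sg (cpow e \<otimes> snd y) = e" using sg_cpow_r[OF y(2) yc y(3)] .
    ultimately show ?thesis unfolding decomp_def compose_def x using Cons n by (cases y) simp
  next
    case False
    then have d: "decomp t x = (cpow e, xs)" unfolding decomp_def x by (cases xs) auto
    show ?thesis unfolding d compose_def using cpow_CC sg_cpow x by simp
  qed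
qed

lemma K3: assumes "a \<in> car t" "ys \<in> Yt t" shows "decomp t (compose t a ys) = (a, ys)"
proof (cases "a \<in> CC")
  case True
  then have "compose t a ys = (sg a, ys)" unfolding compose_def by simp
  moreover have "\<not> (ys \<noteq> [] \<and> fst (hd ys) = t)" using assms(2) unfolding Yt_def by auto
  ultimately show ?thesis unfolding decomp_def using cpow_sg[OF True] by (cases ys) auto
next
  case False
  then have "compose t a ys = (sg a, (t, rep a) # ys)" unfolding compose_def by simp
  then show ?thesis unfolding decomp_def using decomp_rep[OF car_carrier[OF assms(1)]] by simp
qed

lemma K4: assumes "a \<in> car t" "ys \<in> Yt t" shows "compose t a ys \<in> XS"
proof (cases "a \<in> CC")
  case True
  then show ?thesis unfolding compose_def XS_def using assms(2) unfolding Yt_def by simp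
next
  case False
  have ac: "a \<in> carrier W" using assms(1) car_carrier by blast
  have "okl ((t, rep a) # ys)" unfolding okl_Cons
    using assms(2) rep_car[OF assms(1)] rep_notCC[OF False ac] rep_rep[OF False ac] unfolding Yt_def by auto
  then show ?thesis unfolding compose_def XS_def using False by simp
qed

lemma act_closed: "a \<in> car t \<Longrightarrow> x \<in> XS \<Longrightarrow> act t a x \<in> XS"
  unfolding act_def using K1 K4 mult_car by blast

lemma act_mult: assumes "a \<in> car t" "b \<in> car t" "x \<in> XS"
  shows "act t (a \<otimes> b) x = act t a (act t b x)"
proof -
  have d1: "fst (decomp t x) \<in> car t" "snd (decomp t x) \<in> Yt t" using K1[OF assms(3)] by auto
  have "decomp t (act t b x) = (b \<otimes> fst (decomp t x), snd (decomp t x))"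
    unfolding act_def by (rule K3[OF mult_car[OF assms(2) d1(1)] d1(2)])
  then show ?thesis unfolding act_def
    using m_assoc car_carrier assms d1 by simp
qed

lemma act_one: assumes "x \<in> XS" shows "act t \<one> x = x"
proof -
  have "fst (decomp t x) \<in> carrier W" using K1(1)[OF assms] by (rule car_carrier)
  then show ?thesis unfolding act_def using K2[OF assms] by simp
qed

lemma act_c: assumes "x \<in> XS" shows "act t c x = (\<not> fst x, snd x)"
proof -
  obtain e xs where x: "x = (e, xs)" by (cases x)
  have ok: "okl xs" using assms x unfolding XS_def by simp
  show ?thesis
  proof (cases "xs \<noteq> [] \<and> fst (hd xs) = t")
    case True
    then obtain y ys where Cons: "xs = y # ys" "fst y = t" by (cases xs) auto
    have y: "snd y \<in> car t" "snd y \<notin> CC" "rep (snd y) = snd y" using ok Cons okl_Cons by auto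
    have yc: "snd y \<in> carrier W" using y car_carrier by blast
    have e: "c \<otimes> (cpow e \<otimes> snd y) = cpow (\<not> e) \<otimes> snd y"
      using cpow_neg m_assoc[symmetric] cC cpow_C yc by metis
    have n: "cpow (\<not>e) \<otimes> snd y \<notin> CC" using CC_mult_iff[OF cpow_CC yc] y by simp
    have "rep (cpow (\<not>e) \<otimes> snd y) = snd y" using rep_cpow[OF y(2) yc] y(3) by simp
    moreover have "sg (cpow (\<not>e) \<otimes> snd y) = (\<not>e)" using sg_cpow_r[OF y(2) yc y(3)] .
    ultimately show ?thesis unfolding act_def decomp_def compose_def x using Cons n e by (cases y) simp
  next
    case False
    then have d: "decomp t x = (cpow e, xs)" unfolding decomp_def x by (cases xs) auto
    have "c \<otimes> cpow e = cpow (\<not> e)" by (rule cpow_neg)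
    then show ?thesis unfolding act_def d compose_def using cpow_CC sg_cpow x by simp
  qed
qed

lemma prodl_carrier: "\<forall>y\<in>set xs. snd y \<in> carrier W \<Longrightarrow> prodl xs \<in> carrier W"
  unfolding prodl_def by (induction xs) auto

lemma okl_carrier: "okl xs \<Longrightarrow> \<forall>y\<in>set xs. snd y \<in> carrier W"
  unfolding okl_def using car_carrier by blast

lemma prodl_Cons: "prodl (y # ys) = snd y \<otimes> prodl ys" unfolding prodl_def by simp

lemma eval_decomp: assumes "x \<in> XS" shows "evalX x = fst (decomp t x) \<otimes> prodl (snd (decomp t x))"
proof -
  obtain e xs where x: "x = (e, xs)" by (cases x)
  have ok: "okl xs" using assms x unfolding XS_def by simp
  show ?thesis
  proof (cases "xs \<noteq> [] \<and> fst (hd xs) = t")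
    case True
    then obtain y ys where Cons: "xs = y # ys" "fst y = t" by (cases xs) auto
    have yc: "snd y \<in> carrier W" "prodl ys \<in> carrier W"
      using ok Cons okl_Cons car_carrier prodl_carrier okl_carrier by auto
    show ?thesis unfolding evalX_def decomp_def x using Cons yc cpow_C
      by (simp add: prodl_Cons m_assoc)
  next
    case False
    then have d: "decomp t (e, xs) = (cpow e, xs)" unfolding decomp_def by (cases xs) auto
    show ?thesis unfolding evalX_def x d by simp
  qed
qed

lemma eval_compose: assumes "a \<in> car t" "ys \<in> Yt t" shows "evalX (compose t a ys) = a \<otimes> prodl ys"
proof -
  have "evalX (compose t a ys) = fst (decomp t (compose t a ys)) \<otimes> prodl (snd (decomp t (compose t a ys)))"
    by (rule eval_decomp[OF K4[OF assms]])
  then show ?thesis using K3[OF assms] by simp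
qed

lemma eval_act: assumes "a \<in> car t" "x \<in> XS" shows "evalX (act t a x) = a \<otimes> evalX x"
proof -
  have d1: "fst (decomp t x) \<in> car t" "snd (decomp t x) \<in> Yt t" using K1[OF assms(2)] by auto
  have ok: "okl (snd (decomp t x))" using d1 unfolding Yt_def by simp
  have "evalX (act t a x) = (a \<otimes> fst (decomp t x)) \<otimes> prodl (snd (decomp t x))"
    unfolding act_def by (rule eval_compose[OF mult_car[OF assms(1) d1(1)] d1(2)])
  also have "\<dots> = a \<otimes> evalX x" unfolding eval_decomp[OF assms(2), of t]
    using m_assoc car_carrier assms d1 prodl_carrier[OF okl_carrier[OF ok]] by simp
  finally show ?thesis .
qed

lemma act_grow: assumes "a \<in> car t" "a \<notin> CC" "ys \<in> Yt t"
  shows "act t a (e, ys) = (sg (a \<otimes> cpow e), (t, rep (a \<otimes> cpow e)) # ys)"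
proof -
  have "decomp t (e, ys) = (cpow e, ys)" using assms(3) unfolding decomp_def Yt_def by (cases ys) auto
  moreover have "a \<otimes> cpow e \<notin> CC"
  proof
    assume "a \<otimes> cpow e \<in> CC"
    then have "(a \<otimes> cpow e) \<otimes> cpow e \<in> CC" unfolding cpow_def CC_def using cc cC by auto
    moreover have "(a \<otimes> cpow e) \<otimes> cpow e = a" unfolding cpow_def using cc cC car_carrier[OF assms(1)]
      by (simp add: m_assoc)
    ultimately show False using assms(2) by simp
  qed
  ultimately show ?thesis unfolding act_def compose_def by simp
qed

end


locale dih = group W for W :: "('a, 'b) monoid_scheme" (structure) +
  fixes s t :: 'a and k :: nat
  assumes sC: "s \<in> carrier W" and tC: "t \<in> carrier W" and ss: "s \<otimes> s = \<one>" and tt: "t \<otimes> t = \<one>"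
    and ord: "\<And>n. (s \<otimes> t) [^] n = \<one> \<longleftrightarrow> k dvd n" and kodd: "odd k"
begin

definition r :: 'a where "r = s \<otimes> t"
definition Dset :: "'a set" where "Dset = {r [^] (j::nat) | j. True} \<union> {r [^] (j::nat) \<otimes> s | j. True}"

lemma rC: "r \<in> carrier W" unfolding r_def using sC tC by simp
lemma rpC: "r [^] (j::nat) \<in> carrier W" using rC by simp
lemma inv_s: "inv s = s" using ss sC inv_char[of s s] by simp
lemma inv_t: "inv t = t" using tt tC inv_char[of t t] by simp
lemma rk: "r [^] k = \<one>" unfolding r_def using ord by simp
lemma r_ord: "r [^] (n::nat) = \<one> \<longleftrightarrow> k dvd n" unfolding r_def using ord by simp

lemma ss_cancel: "x \<in> carrier W \<Longrightarrow> s \<otimes> (s \<otimes> x) = x"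
  using sC ss by (simp add: m_assoc[symmetric])

lemma srs: "s \<otimes> r \<otimes> s = inv r"
proof -
  have "s \<otimes> r \<otimes> s = (s \<otimes> s) \<otimes> t \<otimes> s" unfolding r_def using sC tC by (simp add: m_assoc)
  also have "\<dots> = t \<otimes> s" using ss tC sC by simp
  also have "\<dots> = inv r" unfolding r_def using sC tC inv_s inv_t by (simp add: inv_mult_group)
  finally show ?thesis .
qed

lemma srs_pow: "s \<otimes> r [^] (j::nat) \<otimes> s = inv (r [^] j)"
proof (induction j)
  case 0 then show ?case using ss sC by simp
next
  case (Suc j)
  have "s \<otimes> r [^] Suc j \<otimes> s = (s \<otimes> r [^] j \<otimes> s) \<otimes> (s \<otimes> r \<otimes> s)"
    using sC rC ss by (simp add: m_assoc nat_pow_Suc ss_cancel)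
  also have "\<dots> = inv (r [^] j) \<otimes> inv r" using Suc srs by simp
  also have "\<dots> = inv (r \<otimes> r [^] j)" using rC by (simp add: inv_mult_group)
  also have "r \<otimes> r [^] j = r [^] Suc j" by (rule nat_pow_Suc2[OF rC, symmetric])
  finally show ?case .
qed

lemma s_rpow: "s \<otimes> r [^] (j::nat) = inv (r [^] j) \<otimes> s"
proof -
  have "inv (r [^] j) \<otimes> s = (s \<otimes> r [^] j \<otimes> s) \<otimes> s" using srs_pow by simp
  also have "\<dots> = s \<otimes> r [^] j" using sC rC ss by (simp add: m_assoc)
  finally show ?thesis by simp
qed

lemma inv_rpow: "inv (r [^] (j::nat)) = r [^] ((k - 1) * j)"
proof -
  have "r [^] j \<otimes> r [^] ((k - 1) * j) = r [^] (j + (k - 1) * j)" using rC by (simp add: nat_pow_mult)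
  also have "j + (k - 1) * j = k * j" using kodd by (cases k) auto
  also have "r [^] (k * j) = \<one>" using r_ord by simp
  finally have h: "r [^] j \<otimes> r [^] ((k - 1) * j) = \<one>" .
  have "r [^] ((k - 1) * j) \<otimes> r [^] j = r [^] j \<otimes> r [^] ((k - 1) * j)"
    using rC by (simp add: nat_pow_mult add.commute)
  then have h': "r [^] ((k - 1) * j) \<otimes> r [^] j = \<one>" using h by simp
  show ?thesis by (rule inv_char[OF rpC rpC h h'])
qed

lemma s_rpow2: "s \<otimes> r [^] (j::nat) = r [^] ((k - 1) * j) \<otimes> s"
  using s_rpow inv_rpow by simp

lemma Dset_mult: assumes "a \<in> Dset" "b \<in> Dset" shows "a \<otimes> b \<in> Dset"
proof -
  obtain i :: nat where ai: "a = r [^] i \<or> a = r [^] i \<otimes> s" using assms(1) unfolding Dset_def by blast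
  obtain j :: nat where bj: "b = r [^] j \<or> b = r [^] j \<otimes> s" using assms(2) unfolding Dset_def by blast
  have e1: "r [^] i \<otimes> r [^] j = r [^] (i + j)" using rC by (simp add: nat_pow_mult)
  have e2: "(r [^] i \<otimes> s) \<otimes> r [^] j = r [^] (i + (k - 1) * j) \<otimes> s"
    using rC sC s_rpow2 by (simp add: m_assoc nat_pow_mult[symmetric])
  from ai bj show ?thesis
  proof (elim disjE)
    assume "a = r [^] i" "b = r [^] j" then show ?thesis using e1 unfolding Dset_def by auto
  next
    assume "a = r [^] i" "b = r [^] j \<otimes> s"
    then have "a \<otimes> b = r [^] (i + j) \<otimes> s" using e1 rC sC by (simp add: m_assoc[symmetric])
    then show ?thesis unfolding Dset_def by auto
  next
    assume "a = r [^] i \<otimes> s" "b = r [^] j"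
    then show ?thesis using e2 unfolding Dset_def by auto
  next
    assume "a = r [^] i \<otimes> s" "b = r [^] j \<otimes> s"
    then have "a \<otimes> b = (r [^] (i + (k - 1) * j) \<otimes> s) \<otimes> s" using e2 rC sC by (simp add: m_assoc[symmetric])
    also have "\<dots> = r [^] (i + (k - 1) * j)" using rC sC ss by (simp add: m_assoc)
    finally show ?thesis unfolding Dset_def by auto
  qed
qed

lemma Dset_inv: assumes "a \<in> Dset" shows "inv a \<in> Dset"
proof -
  obtain i :: nat where ai: "a = r [^] i \<or> a = r [^] i \<otimes> s" using assms(1) unfolding Dset_def by blast
  then show ?thesis
  proof
    assume "a = r [^] i" then show ?thesis using inv_rpow unfolding Dset_def by auto
  next
    assume a: "a = r [^] i \<otimes> s"
    have "inv a = s \<otimes> inv (r [^] i)" unfolding a using rC sC inv_s by (simp add: inv_mult_group)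
    also have "\<dots> = s \<otimes> r [^] ((k - 1) * i)" using inv_rpow by simp
    also have "\<dots> = r [^] ((k - 1) * ((k - 1) * i)) \<otimes> s" by (rule s_rpow2)
    finally show ?thesis unfolding Dset_def by auto
  qed
qed

lemma Dset_sub: "subgroup Dset W"
proof (rule subgroupI)
  show "Dset \<subseteq> carrier W" unfolding Dset_def using rC sC by auto
  show "Dset \<noteq> {}" unfolding Dset_def by auto
qed (auto simp: Dset_inv Dset_mult)

lemma s_D: "s \<in> Dset"
proof -
  have "s = r [^] (0::nat) \<otimes> s" using sC by simp
  then show ?thesis unfolding Dset_def by blast
qed

lemma t_D: "t \<in> Dset"
proof -
  have "s \<otimes> r = t" unfolding r_def using sC tC ss by (simp add: m_assoc[symmetric])
  moreover have "s \<otimes> r = r [^] ((k - 1) * 1) \<otimes> s" using s_rpow2[of 1] rC by simp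
  ultimately have "t = r [^] ((k - 1) * 1) \<otimes> s" by simp
  then have "t \<in> {r [^] (j::nat) \<otimes> s | j. True}" by blast
  then show ?thesis unfolding Dset_def by blast
qed

lemma rpow_self_inv: assumes "inv (r [^] (j::nat)) = r [^] j" shows "r [^] j = \<one>"
proof -
  have "r [^] j \<otimes> r [^] j = \<one>" using r_inv[OF rpC[of j]] assms by simp
  then have "r [^] (j + j) = \<one>" using rC by (simp add: nat_pow_mult)
  then have "k dvd (2 * j)" using r_ord by (simp add: mult_2)
  then obtain q where q: "2 * j = k * q" by (elim dvdE)
  have "even (k * q)" unfolding q[symmetric] by simp
  then have "even q" using kodd by simp
  then obtain q' where "q = 2 * q'" by (elim evenE)
  then have "j = k * q'" using q by simp
  then have "k dvd j" by simp
  then show ?thesis using r_ord by simp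
qed

lemma cent: assumes "d \<in> Dset" "d \<otimes> s = s \<otimes> d" shows "d = \<one> \<or> d = s"
proof -
  obtain j :: nat where dj: "d = r [^] j \<or> d = r [^] j \<otimes> s" using assms(1) unfolding Dset_def by blast
  then show ?thesis
  proof
    assume d: "d = r [^] j"
    have "s \<otimes> r [^] j \<otimes> s = r [^] j \<otimes> s \<otimes> s" using assms(2) d by simp
    also have "\<dots> = r [^] j" using rC sC ss by (simp add: m_assoc)
    finally have "inv (r [^] j) = r [^] j" using srs_pow by simp
    then show ?thesis using rpow_self_inv d by simp
  next
    assume d: "d = r [^] j \<otimes> s"
    have "s \<otimes> r [^] j \<otimes> s = d \<otimes> s" using assms(2) d rC sC by (simp add: m_assoc)
    also have "\<dots> = r [^] j" using rC sC ss d by (simp add: m_assoc)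
    finally have "inv (r [^] j) = r [^] j" using srs_pow by simp
    then have "r [^] j = \<one>" by (rule rpow_self_inv)
    then show ?thesis using d sC by simp
  qed
qed

lemma invol: assumes "d \<in> Dset" "d \<otimes> d = \<one>" "d \<noteq> \<one>" shows "\<exists>h\<in>carrier W. d = h \<otimes> s \<otimes> inv h"
proof -
  obtain j :: nat where dj: "d = r [^] j \<or> d = r [^] j \<otimes> s" using assms(1) unfolding Dset_def by blast
  then show ?thesis
  proof
    assume d: "d = r [^] j"
    then have "inv (r [^] j) = r [^] j" using assms(2) inv_char[OF rpC rpC] by simp
    then show ?thesis using rpow_self_inv d assms(3) by simp
  next
    assume d: "d = r [^] j \<otimes> s"
    define a where "a = j * ((k + 1) div 2)"
    have h2: "2 * ((k + 1) div 2) = k + 1" using kodd by simp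
    have a2: "a + a = j + k * j"
    proof -
      have "a + a = j * (2 * ((k + 1) div 2))" unfolding a_def by simp
      also have "\<dots> = j + k * j" unfolding h2 by simp
      finally show ?thesis .
    qed
    have "r [^] a \<otimes> s \<otimes> inv (r [^] a) = r [^] a \<otimes> (s \<otimes> inv (r [^] a))" using rC sC by (simp add: m_assoc)
    also have "s \<otimes> inv (r [^] a) = r [^] a \<otimes> s"
    proof -
      have "s \<otimes> inv (r [^] a) = (s \<otimes> inv (r [^] a) \<otimes> s) \<otimes> s" using rC sC ss by (simp add: m_assoc)
      also have "s \<otimes> inv (r [^] a) \<otimes> s = inv (s \<otimes> r [^] a \<otimes> s)" using rC sC inv_s by (simp add: inv_mult_group m_assoc)
      also have "\<dots> = r [^] a" using srs_pow rC by simp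
      finally show ?thesis .
    qed
    also have "r [^] a \<otimes> (r [^] a \<otimes> s) = r [^] (a + a) \<otimes> s" using rC sC by (simp add: m_assoc[symmetric] nat_pow_mult)
    also have "r [^] (a + a) = r [^] j \<otimes> (r [^] k) [^] j" unfolding a2 using rC by (simp add: nat_pow_mult nat_pow_pow)
    also have "\<dots> = r [^] j" using rk rC by simp
    finally have "d = r [^] a \<otimes> s \<otimes> inv (r [^] a)" using d by simp
    then show ?thesis using rpC by blast
  qed
qed

end


lemma act_word_rep: "act_word f (concat (replicate n [(i,b),(j,b')])) y = ((f i \<circ> f j)^^n) y"
  by (induction n) auto

context act_setup begin

lemma Phi_one: "y \<in> Y \<Longrightarrow> Phi G I g f \<one>\<^bsub>G\<^esub> y = y"
  using Phi_eval[of "[]" y] by simp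

lemma Phi_gen: assumes "i \<in> I" "y \<in> Y" shows "Phi G I g f (g i) y = f i y"
proof -
  have "word_eval G g [(i,False)] = g i" using word_eval_single[of G g i, OF grp gen[OF assms(1)]] .
  then show ?thesis using Phi_eval[of "[(i,False)]" y] assms by simp
qed

lemma Phi_pow: assumes "x \<in> carrier G" "y \<in> Y"
  shows "Phi G I g f (x [^]\<^bsub>G\<^esub> (n::nat)) y = (Phi G I g f x ^^ n) y"
  using assms(2)
proof (induction n arbitrary: y)
  case 0 then show ?case using Phi_one by simp
next
  case (Suc n)
  have "x [^]\<^bsub>G\<^esub> Suc n = x \<otimes>\<^bsub>G\<^esub> x [^]\<^bsub>G\<^esub> n" by (rule monoid.nat_pow_Suc2[OF group.is_monoid[OF grp] assms(1)])
  then have "Phi G I g f (x [^]\<^bsub>G\<^esub> Suc n) y = Phi G I g f x (Phi G I g f (x [^]\<^bsub>G\<^esub> n) y)"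
    using Phi_mult[OF assms(1) _ Suc.prems] assms(1) grp by (simp add: group.is_monoid monoid.nat_pow_closed)
  then show ?case using Suc by simp
qed

end

definition Qprop :: "('a,'b) monoid_scheme \<Rightarrow> nat set \<Rightarrow> (nat \<Rightarrow> 'a) \<Rightarrow> bool" where
  "Qprop G I g \<longleftrightarrow>
    (\<forall>i\<in>I. \<forall>j\<in>I. \<exists>h\<in>carrier G. g j = h \<otimes>\<^bsub>G\<^esub> g i \<otimes>\<^bsub>G\<^esub> inv\<^bsub>G\<^esub> h) \<and>
    (\<forall>i\<in>I. \<forall>x\<in>carrier G. x \<otimes>\<^bsub>G\<^esub> g i = g i \<otimes>\<^bsub>G\<^esub> x \<longrightarrow> x = \<one>\<^bsub>G\<^esub> \<or> x = g i) \<and>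
    (\<forall>w\<in>carrier G. w \<otimes>\<^bsub>G\<^esub> w = \<one>\<^bsub>G\<^esub> \<longrightarrow> w \<noteq> \<one>\<^bsub>G\<^esub> \<longrightarrow>
        (\<exists>i\<in>I. \<exists>h\<in>carrier G. w = h \<otimes>\<^bsub>G\<^esub> g i \<otimes>\<^bsub>G\<^esub> inv\<^bsub>G\<^esub> h))"

definition fz :: "nat \<Rightarrow> nat \<Rightarrow> nat \<Rightarrow> int \<Rightarrow> int" where
  "fz v k i y = (if i = v then (1 - y) mod int k else (- y) mod int k)"

lemma fz_inv: assumes "y \<in> {0..<int k}" shows "fz v k i (fz v k i y) = y"
proof -
  have "y mod int k = y" using assms by simp
  then show ?thesis unfolding fz_def by (simp add: mod_diff_right_eq mod_minus_eq)
qed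

lemma fz_closed: "k > 0 \<Longrightarrow> fz v k i y \<in> {0..<int k}"
  unfolding fz_def by auto

lemma funpow_id_on: assumes "\<And>y. y \<in> Y \<Longrightarrow> h y = y" "y \<in> Y" shows "(h ^^ n) y = y"
  using assms by (induction n) auto

lemma funpow_shift: assumes "y mod b = y" shows "((\<lambda>y. (y + a) mod (b::int)) ^^ n) y = (y + int n * a) mod b"
proof (induction n)
  case 0 then show ?case using assms by simp
next
  case (Suc n)
  have "((\<lambda>y. (y + a) mod b) ^^ Suc n) y = ((y + int n * a) mod b + a) mod b" using Suc by simp
  also have "\<dots> = (y + int (Suc n) * a) mod b" by (simp add: mod_add_left_eq mod_add_right_eq algebra_simps)
  finally show ?case .
qed

lemma fz_rel:
  assumes mat: "matI I m" and vI: "v \<in> I" and uI: "u \<in> I" "u \<noteq> v" and mvu: "m v u = enat k" and k0: "k > 0"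
    and leaf: "\<forall>j\<in>I. j \<noteq> v \<longrightarrow> j \<noteq> u \<longrightarrow> m v j = \<infinity>"
    and r: "r \<in> relI I m" and y: "y \<in> {0..<int k}"
  shows "act_word (fz v k) r y = y"
proof -
  obtain i j n where r: "r = concat (replicate n [(i, False), (j, False)])" "i \<in> I" "j \<in> I" "m i j = enat n"
    using r unfolding relI_def by (auto simp only: mem_Collect_eq)
  have aw: "act_word (fz v k) r y = ((fz v k i \<circ> fz v k j)^^n) y" unfolding r(1) by (rule act_word_rep)
  have msym: "\<forall>i\<in>I. \<forall>j\<in>I. m i j = m j i" using mat unfolding matI_def by (elim conjE)
  have symm: "m i j = m j i" using msym r(2,3) by simp
  have ymod: "y mod int k = y" using y by simp
  show ?thesis
  proof (cases "i = v")
    case True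
    show ?thesis
    proof (cases "j = v")
      case True
      have mvv: "\<forall>i\<in>I. m i i = 1" using mat unfolding matI_def by (elim conjE)
      then have "m v v = 1" using vI by simp
      then have "n = 1" using \<open>i = v\<close> True r(4) by (simp add: one_enat_def)
      then show ?thesis using aw fz_inv[OF y] \<open>i = v\<close> True by simp
    next
      case False
      have "j = u"
      proof (rule ccontr)
        assume "j \<noteq> u"
        then have "m v j = \<infinity>" using leaf r(3) False by simp
        then show False using r(4) \<open>i = v\<close> by simp
      qed
      then have n: "n = k" using r(4) mvu \<open>i = v\<close> by simp
      have "(fz v k i \<circ> fz v k j) = (\<lambda>y. (y + 1) mod int k)"
        by (rule ext) (simp add: fz_def \<open>i = v\<close> False mod_diff_right_eq add.commute)
      moreover have "((\<lambda>y. (y + 1) mod int k) ^^ n) y = (y + int n * 1) mod int k" by (rule funpow_shift[OF ymod])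
      moreover have "(y + int k * 1) mod int k = y" using ymod by simp
      ultimately show ?thesis using aw n by simp
    qed
  next
    case False
    show ?thesis
    proof (cases "j = v")
      case True
      have "i = u"
      proof (rule ccontr)
        assume "i \<noteq> u"
        then have "m v i = \<infinity>" using leaf r(2) False by simp
        then show False using r(4) True symm by simp
      qed
      have "m u v = m v u" using msym uI vI by simp
      then have n: "n = k" using r(4) mvu True \<open>i = u\<close> by simp
      have "(fz v k i \<circ> fz v k j) = (\<lambda>y. (y + (-1)) mod int k)"
        by (rule ext) (simp add: fz_def False True mod_minus_eq)
      moreover have "((\<lambda>y. (y + (-1)) mod int k) ^^ n) y = (y + int n * (-1)) mod int k" by (rule funpow_shift[OF ymod])
      moreover have "(y + int k * (-1)) mod int k = y" using ymod by simp
      ultimately show ?thesis using aw n by simp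
    next
      case False2: False
      have "(fz v k i \<circ> fz v k j) y' = y'" if "y' \<in> {0..<int k}" for y'
      proof -
        have "y' mod int k = y'" using that by simp
        then show ?thesis by (simp add: fz_def False False2 mod_minus_eq)
      qed
      then have "((fz v k i \<circ> fz v k j)^^n) y = y" using funpow_id_on[of "{0..<int k}" "fz v k i \<circ> fz v k j" y n] y by simp
      then show ?thesis using aw by simp
    qed
  qed
qed


lemma funpow_cong_on:
  assumes "\<And>y. y \<in> Y \<Longrightarrow> f y = f' y" "\<And>y. y \<in> Y \<Longrightarrow> f y \<in> Y" "y \<in> Y"
  shows "(f ^^ n) y = (f' ^^ n) y \<and> (f ^^ n) y \<in> Y"
proof (induction n)
  case 0 then show ?case using assms(3) by simp
next
  case (Suc n)
  define z where "z = (f ^^ n) y"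
  have z: "z \<in> Y" "(f' ^^ n) y = z" using Suc unfolding z_def by auto
  have "(f ^^ Suc n) y = f z" unfolding z_def by simp
  moreover have "(f' ^^ Suc n) y = f' z" using z(2) by simp
  ultimately show ?case using assms(1)[OF z(1)] assms(2)[OF z(1)] by simp
qed

locale stepctx =
  fixes W :: "('a,'b) monoid_scheme" (structure) and I g m v u k
  assumes pres: "has_presentation W I g (relI I m)" and mat: "matI I m"
    and vI: "v \<in> I" and uI: "u \<in> I" and uv: "u \<noteq> v" and mvu: "m v u = enat k"
    and kodd: "odd k" and k3: "k \<ge> 3"
    and leaf: "\<forall>j\<in>I. j \<noteq> v \<longrightarrow> j \<noteq> u \<longrightarrow> m v j = \<infinity>"
    and IH: "Qprop (W\<lparr>carrier := word_eval W g ` {w. set w \<subseteq> (I - {v}) \<times> UNIV}\<rparr>) (I - {v}) g"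
begin

sublocale group W by (rule hp_group[OF pres])

definition Acar :: "'a set" where "Acar = word_eval W g ` {w. set w \<subseteq> (I - {v}) \<times> UNIV}"

lemma gC: "i \<in> I \<Longrightarrow> g i \<in> carrier W" by (rule hp_gen[OF pres])
lemma gg: "i \<in> I \<Longrightarrow> g i \<otimes> g i = \<one>" by (rule cox_inv[OF pres mat])
lemma ginv: "i \<in> I \<Longrightarrow> inv (g i) = g i" using gg gC inv_char by blast
lemma msym: "i \<in> I \<Longrightarrow> j \<in> I \<Longrightarrow> m i j = m j i"
proof -
  assume "i \<in> I" "j \<in> I"
  moreover have "\<forall>i\<in>I. \<forall>j\<in>I. m i j = m j i" using mat unfolding matI_def by (elim conjE)
  ultimately show ?thesis by simp
qed
lemma muv: "m u v = enat k" using msym[OF uI vI] mvu by simp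
lemma k0: "k > 0" using k3 by simp

lemma Asub: "subgroup Acar W" unfolding Acar_def
  by (rule words_subgroup[OF hp_group[OF pres]]) (use gC in blast)

lemma gA: assumes "i \<in> I" "i \<noteq> v" shows "g i \<in> Acar"
proof -
  have "g i = word_eval W g [(i,False)]" using gC[OF assms(1)] by simp
  moreover have "[(i,False)] \<in> {w. set w \<subseteq> (I - {v}) \<times> UNIV}" using assms by simp
  ultimately show ?thesis unfolding Acar_def by (rule image_eqI)
qed

lemma Aword: "set w \<subseteq> (I - {v}) \<times> UNIV \<Longrightarrow> word_eval W g w \<in> Acar"
  unfolding Acar_def by blast

lemma wordsC: "set w \<subseteq> I \<times> UNIV \<Longrightarrow> \<forall>x\<in>set w. g (fst x) \<in> carrier W"
  using gC by auto

interpretation Z: act_setup W I g "relI I m" "{0..<int k}" "fz v k"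
proof
  show "has_presentation W I g (relI I m)" by (rule pres)
  show "\<And>i y. y \<in> {0..<int k} \<Longrightarrow> fz v k i y \<in> {0..<int k}" using fz_closed k0 by blast
  show "\<And>i y. i \<in> I \<Longrightarrow> y \<in> {0..<int k} \<Longrightarrow> fz v k i (fz v k i y) = y" by (rule fz_inv)
  show "\<And>r y. r \<in> relI I m \<Longrightarrow> y \<in> {0..<int k} \<Longrightarrow> act_word (fz v k) r y = y"
    by (rule fz_rel[OF mat vI uI uv mvu k0 leaf])
qed

abbreviation "PZ \<equiv> Phi W I g (fz v k)"

lemma PZ_r: assumes "y \<in> {0..<int k}" shows "PZ (g u \<otimes> g v) y = (y - 1) mod int k"
proof -
  have "PZ (g u \<otimes> g v) y = fz v k u (fz v k v y)"
    using Z.Phi_mult[OF gC[OF uI] gC[OF vI] assms] Z.Phi_gen[OF vI assms] Z.Phi_gen[OF uI] fz_closed k0 by simp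
  also have "\<dots> = (y - 1) mod int k" unfolding fz_def using uv by (simp add: mod_minus_eq)
  finally show ?thesis .
qed

lemma PZ_rpow: assumes "y \<in> {0..<int k}" shows "PZ ((g u \<otimes> g v) [^] (n::nat)) y = (y - int n) mod int k"
proof -
  have rc: "g u \<otimes> g v \<in> carrier W" using gC uI vI by simp
  have "(PZ (g u \<otimes> g v) ^^ n) y = (y - int n) mod int k"
  proof (induction n)
    case 0 then show ?case using assms by simp
  next
    case (Suc n)
    have "(y - int n) mod int k \<in> {0..<int k}" using k0 by simp
    then have "PZ (g u \<otimes> g v) ((y - int n) mod int k) = ((y - int n) mod int k - 1) mod int k"
      by (rule PZ_r)
    also have "\<dots> = (y - int (Suc n)) mod int k" by (simp add: mod_diff_left_eq algebra_simps)
    finally show ?case using Suc by simp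
  qed
  then show ?thesis using Z.Phi_pow[OF rc assms] by simp
qed

lemma ord: "(g u \<otimes> g v) [^] n = \<one> \<longleftrightarrow> k dvd n"
proof
  assume h: "(g u \<otimes> g v) [^] n = \<one>"
  have z: "(0::int) \<in> {0..<int k}" using k0 by simp
  have "PZ ((g u \<otimes> g v) [^] n) 0 = 0" using h Z.Phi_one[OF z] by simp
  then have "(0 - int n) mod int k = 0" using PZ_rpow[OF z] by simp
  then have "int k dvd int n" by (simp add: mod_eq_0_iff_dvd)
  then show "k dvd n" by simp
next
  assume "k dvd n"
  then obtain q where q: "n = k * q" by (elim dvdE)
  have "(g u \<otimes> g v) [^] k = \<one>" by (rule cox_rel[OF pres uI vI muv])
  then show "(g u \<otimes> g v) [^] n = \<one>" unfolding q using gC uI vI by (simp add: nat_pow_pow[symmetric])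
qed

lemma gu1: "g u \<noteq> \<one>"
proof
  assume h: "g u = \<one>"
  have z: "(1::int) \<in> {0..<int k}" using k3 by simp
  have "PZ (g u) 1 = 1" using h Z.Phi_one[OF z] by simp
  moreover have "PZ (g u) 1 = (- 1) mod int k" using Z.Phi_gen[OF uI z] uv unfolding fz_def by simp
  moreover have "(- 1) mod int k = int k - 1" using k3 by (simp add: zmod_zminus1_eq_if)
  ultimately show False using k3 by simp
qed

lemma gv1: "g v \<noteq> \<one>"
proof
  assume h: "g v = \<one>"
  have z: "(0::int) \<in> {0..<int k}" using k3 by simp
  have "PZ (g v) 0 = 0" using h Z.Phi_one[OF z] by simp
  moreover have "PZ (g v) 0 = 1 mod int k" using Z.Phi_gen[OF vI z] unfolding fz_def by simp
  ultimately show False using k3 by simp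
qed

sublocale D: dih W "g u" "g v" k
  by unfold_locales (use gC uI vI gg ord kodd in auto)

sublocale AM: amalg W Acar D.Dset "g u"
  by (rule amalg.intro[OF hp_group[OF pres] amalg_axioms.intro[OF Asub D.Dset_sub gA[OF uI uv] D.s_D gg[OF uI] gu1]])

lemma carT: "AM.car True = Acar" unfolding AM.car_def by simp
lemma carF: "AM.car False = D.Dset" unfolding AM.car_def by simp

end


context stepctx begin

definition fX :: "nat \<Rightarrow> bool \<times> (bool \<times> 'a) list \<Rightarrow> bool \<times> (bool \<times> 'a) list" where
  "fX i = (if i = v then AM.act False (g v) else if i \<in> I then AM.act True (g i) else id)"

lemma gv_car: "g v \<in> AM.car False" using D.t_D carF by simp
lemma gi_car: "i \<in> I \<Longrightarrow> i \<noteq> v \<Longrightarrow> g i \<in> AM.car True" using gA carT by simp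

lemma fX_u: "y \<in> AM.XS \<Longrightarrow> fX u y = AM.act t (g u) y"
  unfolding fX_def using uv uI AM.act_c by simp

lemma fX_v: "fX v y = AM.act False (g v) y" unfolding fX_def by simp
lemma fX_i: "i \<in> I \<Longrightarrow> i \<noteq> v \<Longrightarrow> fX i y = AM.act True (g i) y" unfolding fX_def by simp

lemma fX_closed: "y \<in> AM.XS \<Longrightarrow> fX i y \<in> AM.XS"
  unfolding fX_def using AM.act_closed gv_car gi_car by auto

lemma fX_inv: assumes "i \<in> I" "y \<in> AM.XS" shows "fX i (fX i y) = y"
proof (cases "i = v")
  case True
  then show ?thesis unfolding fX_def
    using AM.act_mult[OF gv_car gv_car assms(2), symmetric] gg[OF vI] AM.act_one[OF assms(2)] by simp
next
  case False
  then show ?thesis unfolding fX_def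
    using AM.act_mult[OF gi_car[OF assms(1) False] gi_car[OF assms(1) False] assms(2), symmetric]
      gg[OF assms(1)] AM.act_one[OF assms(2)] assms(1) by simp
qed

lemma pow_car: "a \<in> AM.car t \<Longrightarrow> a [^] (n::nat) \<in> AM.car t"
  by (induction n) (auto simp: AM.one_car AM.mult_car AM.car_carrier)

lemma act_funpow: assumes "a \<in> AM.car t" "b \<in> AM.car t" "y \<in> AM.XS"
  shows "((AM.act t a \<circ> AM.act t b)^^n) y = AM.act t ((a \<otimes> b) [^] n) y"
proof (induction n)
  case 0 then show ?case using AM.act_one[OF assms(3)] by simp
next
  case (Suc n)
  have ab: "a \<otimes> b \<in> AM.car t" using assms AM.mult_car by blast
  have abn: "(a \<otimes> b) [^] n \<in> AM.car t" using pow_car[OF ab] .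
  have x1: "AM.act t ((a \<otimes> b) [^] n) y \<in> AM.XS" by (rule AM.act_closed[OF abn assms(3)])
  have "((AM.act t a \<circ> AM.act t b)^^Suc n) y = AM.act t a (AM.act t b (((AM.act t a \<circ> AM.act t b)^^n) y))"
    by simp
  also have "\<dots> = AM.act t a (AM.act t b (AM.act t ((a \<otimes> b) [^] n) y))"
    by (simp only: Suc.IH)
  also have "\<dots> = AM.act t (a \<otimes> b) (AM.act t ((a \<otimes> b) [^] n) y)"
    using AM.act_mult[OF assms(1,2) x1] by simp
  also have "\<dots> = AM.act t ((a \<otimes> b) \<otimes> (a \<otimes> b) [^] n) y"
    using AM.act_mult[OF ab abn assms(3)] by simp
  also have "(a \<otimes> b) \<otimes> (a \<otimes> b) [^] n = (a \<otimes> b) [^] Suc n"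
    using nat_pow_Suc2[OF AM.car_carrier[OF ab]] by simp
  finally show ?case .
qed

lemma rel_aux:
  assumes fi: "\<And>y. y \<in> AM.XS \<Longrightarrow> fX i y = AM.act t (g i) y"
    and fj: "\<And>y. y \<in> AM.XS \<Longrightarrow> fX j y = AM.act t (g j) y"
    and gi: "g i \<in> AM.car t" and gj: "g j \<in> AM.car t" and rel: "(g i \<otimes> g j) [^] n = \<one>"
    and y: "y \<in> AM.XS"
  shows "((fX i \<circ> fX j)^^n) y = y"
proof -
  have "((fX i \<circ> fX j)^^n) y = ((AM.act t (g i) \<circ> AM.act t (g j))^^n) y"
  proof (rule conjunct1[OF funpow_cong_on[where Y = "AM.XS"]])
    fix z assume z: "z \<in> AM.XS"
    have "fX j z \<in> AM.XS" by (rule fX_closed[OF z])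
    then have "fX i (fX j z) = AM.act t (g i) (fX j z)" by (rule fi)
    then show "(fX i \<circ> fX j) z = (AM.act t (g i) \<circ> AM.act t (g j)) z" using fj[OF z] by simp
  next
    show "\<And>z. z \<in> AM.XS \<Longrightarrow> (fX i \<circ> fX j) z \<in> AM.XS" using fX_closed by simp
  qed (rule y)
  also have "\<dots> = AM.act t ((g i \<otimes> g j) [^] n) y" by (rule act_funpow[OF gi gj y])
  also have "\<dots> = y" using rel AM.act_one[OF y] by simp
  finally show ?thesis .
qed

lemma fX_rel: assumes r: "r \<in> relI I m" and y: "y \<in> AM.XS" shows "act_word fX r y = y"
proof -
  obtain i j n where r: "r = concat (replicate n [(i, False), (j, False)])" "i \<in> I" "j \<in> I" "m i j = enat n"
    using r unfolding relI_def by (auto simp only: mem_Collect_eq)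
  have aw: "act_word fX r y = ((fX i \<circ> fX j)^^n) y" unfolding r(1) by (rule act_word_rep)
  have rel: "(g i \<otimes> g j) [^] n = \<one>" by (rule cox_rel[OF pres r(2,3,4)])
  show ?thesis
  proof (cases "i = v")
    case True
    show ?thesis
    proof (cases "j = v")
      case True
      have "\<forall>i\<in>I. m i i = 1" using mat unfolding matI_def by (elim conjE)
      then have "m v v = 1" using vI by simp
      then have "n = 1" using \<open>i = v\<close> True r(4) by (simp add: one_enat_def)
      then show ?thesis using aw fX_inv[OF vI y] \<open>i = v\<close> True by simp
    next
      case False
      have "j = u"
      proof (rule ccontr)
        assume "j \<noteq> u"
        then have "m v j = \<infinity>" using leaf r(3) False by simp
        then show False using r(4) \<open>i = v\<close> by simp
      qed
      have fi: "\<And>y. fX i y = AM.act False (g i) y" using fX_v \<open>i = v\<close> by simp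
      have fj: "\<And>y. y \<in> AM.XS \<Longrightarrow> fX j y = AM.act False (g j) y" using fX_u \<open>j = u\<close> by simp
      have gi: "g i \<in> AM.car False" using gv_car \<open>i = v\<close> by simp
      have gj: "g j \<in> AM.car False" using AM.c_car \<open>j = u\<close> by simp
      show ?thesis using aw rel_aux[OF fi fj gi gj rel y] by simp
    qed
  next
    case False
    show ?thesis
    proof (cases "j = v")
      case True
      have "i = u"
      proof (rule ccontr)
        assume "i \<noteq> u"
        then have "m v i = \<infinity>" using leaf r(2) False by simp
        then show False using r(4) True msym[OF r(2,3)] by simp
      qed
      have fj: "\<And>y. fX j y = AM.act False (g j) y" using fX_v True by simp
      have fi: "\<And>y. y \<in> AM.XS \<Longrightarrow> fX i y = AM.act False (g i) y" using fX_u \<open>i = u\<close> by simp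
      have gj: "g j \<in> AM.car False" using gv_car True by simp
      have gi: "g i \<in> AM.car False" using AM.c_car \<open>i = u\<close> by simp
      show ?thesis using aw rel_aux[OF fi fj gi gj rel y] by simp
    next
      case False2: False
      have fi: "\<And>y. fX i y = AM.act True (g i) y" using fX_i r(2) False by simp
      have fj: "\<And>y. fX j y = AM.act True (g j) y" using fX_i r(3) False2 by simp
      show ?thesis using aw rel_aux[OF fi fj gi_car[OF r(2) False] gi_car[OF r(3) False2] rel y] by simp
    qed
  qed
qed

sublocale X: act_setup W I g "relI I m" AM.XS fX
proof
  show "has_presentation W I g (relI I m)" by (rule pres)
  show "\<And>i y. y \<in> AM.XS \<Longrightarrow> fX i y \<in> AM.XS" by (rule fX_closed)
  show "\<And>i y. i \<in> I \<Longrightarrow> y \<in> AM.XS \<Longrightarrow> fX i (fX i y) = y" by (rule fX_inv)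
  show "\<And>r y. r \<in> relI I m \<Longrightarrow> y \<in> AM.XS \<Longrightarrow> act_word fX r y = y" by (rule fX_rel)
qed

abbreviation "PX \<equiv> Phi W I g fX"

lemma PX_closed: "x \<in> carrier W \<Longrightarrow> y \<in> AM.XS \<Longrightarrow> PX x y \<in> AM.XS" by (rule X.Phi_closed)
lemma PX_mult: "x \<in> carrier W \<Longrightarrow> z \<in> carrier W \<Longrightarrow> y \<in> AM.XS \<Longrightarrow> PX (x \<otimes> z) y = PX x (PX z y)"
  by (rule X.Phi_mult)

lemma PX_A: assumes "a \<in> Acar" "y \<in> AM.XS" shows "PX a y = AM.act True a y"
proof -
  obtain w where w: "set w \<subseteq> (I - {v}) \<times> UNIV" "a = word_eval W g w" using assms(1) unfolding Acar_def by blast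
  have wI: "set w \<subseteq> I \<times> UNIV" using w(1) by auto
  have "act_word fX w y = AM.act True (word_eval W g w) y" using w(1)
  proof (induction w)
    case Nil then show ?case using AM.act_one[OF assms(2)] by simp
  next
    case (Cons x w)
    have xi: "fst x \<in> I" "fst x \<noteq> v" using Cons by auto
    have w1: "set w \<subseteq> (I - {v}) \<times> UNIV" using Cons by simp
    have ew: "word_eval W g w \<in> AM.car True" using Aword[OF w1] carT by simp
    have "act_word fX (x # w) y = AM.act True (g (fst x)) (AM.act True (word_eval W g w) y)"
      using Cons.IH[OF w1] fX_i[OF xi] by simp
    also have "\<dots> = AM.act True (g (fst x) \<otimes> word_eval W g w) y"
      using AM.act_mult[OF gi_car[OF xi] ew assms(2)] by simp
    also have "g (fst x) \<otimes> word_eval W g w = word_eval W g (x # w)"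
      using ginv[OF xi(1)] by simp
    finally show ?case .
  qed
  then show ?thesis using X.Phi_eval[OF wI assms(2)] w(2) by simp
qed

lemma PX_gu: "y \<in> AM.XS \<Longrightarrow> PX (g u) y = AM.act t (g u) y"
  using X.Phi_gen[OF uI] fX_u by simp
lemma PX_gv: "y \<in> AM.XS \<Longrightarrow> PX (g v) y = AM.act False (g v) y"
  using X.Phi_gen[OF vI] fX_v by simp

lemma PX_D: assumes "d \<in> D.Dset" "y \<in> AM.XS" shows "PX d y = AM.act False d y"
proof -
  have rF: "D.r \<in> AM.car False" unfolding D.r_def using AM.mult_car AM.c_car gv_car by blast
  have Pr: "PX D.r z = AM.act False D.r z" if z: "z \<in> AM.XS" for z
  proof -
    have "PX D.r z = PX (g u) (PX (g v) z)" unfolding D.r_def using PX_mult gC uI vI z by blast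
    also have "\<dots> = AM.act False (g u) (AM.act False (g v) z)"
      using PX_gv[OF z] PX_gu[OF AM.act_closed[OF gv_car z]] by simp
    also have "\<dots> = AM.act False D.r z" unfolding D.r_def using AM.act_mult[OF AM.c_car gv_car z] by simp
    finally show ?thesis .
  qed
  have Prp: "PX (D.r [^] j) z = AM.act False (D.r [^] j) z" if z: "z \<in> AM.XS" for z and j :: nat
  proof (induction j)
    case 0 then show ?case using X.Phi_one[OF z] AM.act_one[OF z] by simp
  next
    case (Suc j)
    have rj: "D.r [^] j \<in> AM.car False" by (rule pow_car[OF rF])
    have "D.r [^] Suc j = D.r \<otimes> D.r [^] j" using nat_pow_Suc2[OF D.rC] by simp
    then have "PX (D.r [^] Suc j) z = PX D.r (PX (D.r [^] j) z)" using PX_mult[OF D.rC D.rpC z] by simp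
    also have "\<dots> = AM.act False D.r (AM.act False (D.r [^] j) z)"
      using Suc Pr AM.act_closed[OF rj z] by simp
    also have "\<dots> = AM.act False (D.r \<otimes> D.r [^] j) z" using AM.act_mult[OF rF rj z] by simp
    also have "\<dots> = AM.act False (D.r [^] Suc j) z" using nat_pow_Suc2[OF D.rC] by simp
    finally show ?case .
  qed
  obtain j :: nat where dj: "d = D.r [^] j \<or> d = D.r [^] j \<otimes> g u" using assms(1) unfolding D.Dset_def by blast
  then show ?thesis
  proof
    assume "d = D.r [^] j" then show ?thesis using Prp[OF assms(2)] by simp
  next
    assume d: "d = D.r [^] j \<otimes> g u"
    have rj: "D.r [^] j \<in> AM.car False" by (rule pow_car[OF rF])
    have "PX d y = PX (D.r [^] j) (PX (g u) y)" unfolding d using PX_mult[OF D.rpC gC[OF uI] assms(2)] .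
    also have "\<dots> = AM.act False (D.r [^] j) (AM.act False (g u) y)"
      using PX_gu[OF assms(2)] Prp[OF AM.act_closed[OF AM.c_car assms(2)]] by simp
    also have "\<dots> = AM.act False d y" unfolding d using AM.act_mult[OF rj AM.c_car assms(2)] by simp
    finally show ?thesis .
  qed
qed

lemma PX_car: "a \<in> AM.car t \<Longrightarrow> y \<in> AM.XS \<Longrightarrow> PX a y = AM.act t a y"
  using PX_A PX_D carT carF by (cases t) auto

lemma evalX_C: "y \<in> AM.XS \<Longrightarrow> AM.evalX y \<in> carrier W"
  unfolding AM.evalX_def AM.XS_def using AM.cpow_C AM.prodl_carrier AM.okl_carrier by simp

lemma eval_PX: assumes "x \<in> carrier W" "y \<in> AM.XS" shows "AM.evalX (PX x y) = x \<otimes> AM.evalX y"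
proof -
  obtain w where w: "set w \<subseteq> I \<times> UNIV" "x = word_eval W g w" using X.carrier_words assms(1) by blast
  have "AM.evalX (act_word fX w y) = word_eval W g w \<otimes> AM.evalX y" using w(1)
  proof (induction w)
    case Nil then show ?case using evalX_C[OF assms(2)] by simp
  next
    case (Cons x w)
    have xi: "fst x \<in> I" using Cons by auto
    have w1: "set w \<subseteq> I \<times> UNIV" using Cons by simp
    have z: "act_word fX w y \<in> AM.XS" by (rule act_word_closed[OF fX_closed assms(2)])
    have ewC: "word_eval W g w \<in> carrier W" by (rule word_eval_closed[OF hp_group[OF pres] wordsC[OF w1]])
    obtain t where t: "g (fst x) \<in> AM.car t" "\<And>z. z \<in> AM.XS \<Longrightarrow> fX (fst x) z = AM.act t (g (fst x)) z"
      using gv_car gi_car[OF xi] fX_v fX_i[OF xi] by (cases "fst x = v") auto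
    have "AM.evalX (act_word fX (x # w) y) = AM.evalX (AM.act t (g (fst x)) (act_word fX w y))"
      using t(2)[OF z] by simp
    also have "\<dots> = g (fst x) \<otimes> (word_eval W g w \<otimes> AM.evalX y)"
      using AM.eval_act[OF t(1) z] Cons.IH[OF w1] by simp
    also have "\<dots> = word_eval W g (x # w) \<otimes> AM.evalX y"
      using ginv[OF xi] gC[OF xi] ewC evalX_C[OF assms(2)] by (simp add: m_assoc)
    finally show ?case .
  qed
  then show ?thesis using X.Phi_eval[OF w(1) assms(2)] w(2) by simp
qed

end


context group begin

lemma cancel1: "x \<in> carrier G \<Longrightarrow> y \<in> carrier G \<Longrightarrow> inv x \<otimes> (x \<otimes> y) = y"
  by (simp add: m_assoc[symmetric])
lemma cancel2: "x \<in> carrier G \<Longrightarrow> y \<in> carrier G \<Longrightarrow> x \<otimes> (inv x \<otimes> y) = y"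
  by (simp add: m_assoc[symmetric])

lemma conj_comp: assumes "h \<in> carrier G" "h' \<in> carrier G" "b \<in> carrier G"
  shows "h \<otimes> (h' \<otimes> b \<otimes> inv h') \<otimes> inv h = (h \<otimes> h') \<otimes> b \<otimes> inv (h \<otimes> h')"
  using assms by (simp add: m_assoc inv_mult_group)

lemma conj_solve: assumes "h \<in> carrier G" "y \<in> carrier G" "x = h \<otimes> y \<otimes> inv h"
  shows "y = inv h \<otimes> x \<otimes> h"
  using assms by (simp add: m_assoc cancel1)

lemma conj_sq: assumes "h \<in> carrier G" "a \<in> carrier G"
  shows "(h \<otimes> a \<otimes> inv h) \<otimes> (h \<otimes> a \<otimes> inv h) = h \<otimes> (a \<otimes> a) \<otimes> inv h"
  using assms by (simp add: m_assoc cancel1)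

lemma conj_one_iff: assumes "h \<in> carrier G" "a \<in> carrier G"
  shows "h \<otimes> a \<otimes> inv h = \<one> \<longleftrightarrow> a = \<one>"
proof
  assume "h \<otimes> a \<otimes> inv h = \<one>"
  then have "a = inv h \<otimes> \<one> \<otimes> h" using conj_solve[OF assms] by simp
  then show "a = \<one>" using assms by simp
qed (use assms in simp)

lemma conj_comm: assumes "h \<in> carrier G" "x \<in> carrier G" "c \<in> carrier G"
    "x \<otimes> (h \<otimes> c \<otimes> inv h) = (h \<otimes> c \<otimes> inv h) \<otimes> x"
  shows "(inv h \<otimes> x \<otimes> h) \<otimes> c = c \<otimes> (inv h \<otimes> x \<otimes> h)"
proof -
  have "(inv h \<otimes> x \<otimes> h) \<otimes> c = inv h \<otimes> (x \<otimes> (h \<otimes> c \<otimes> inv h)) \<otimes> h"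
    using assms(1-3) by (simp add: m_assoc)
  also have "\<dots> = inv h \<otimes> ((h \<otimes> c \<otimes> inv h) \<otimes> x) \<otimes> h" by (simp only: assms(4))
  also have "\<dots> = c \<otimes> (inv h \<otimes> x \<otimes> h)" using assms(1-3) by (simp add: m_assoc cancel1)
  finally show ?thesis .
qed

lemma conj_back: assumes "h \<in> carrier G" "x \<in> carrier G" shows "x = h \<otimes> (inv h \<otimes> x \<otimes> h) \<otimes> inv h"
  using assms by (simp add: m_assoc cancel2)

end

context stepctx begin

definition Pw :: "(bool \<times> 'a) list \<Rightarrow> bool" where
  "Pw gs \<longleftrightarrow> successively (\<lambda>a b. fst a \<noteq> fst b) gs \<and> (\<forall>y\<in>set gs. snd y \<in> AM.car (fst y) \<and> snd y \<notin> AM.CC)"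

lemma Pw_append: "Pw (gs @ hs) \<longleftrightarrow> Pw gs \<and> Pw hs \<and> (gs \<noteq> [] \<longrightarrow> hs \<noteq> [] \<longrightarrow> fst (last gs) \<noteq> fst (hd hs))"
  unfolding Pw_def successively_append_iff set_append ball_Un by blast

lemma Pw_single: "Pw [y] \<longleftrightarrow> snd y \<in> AM.car (fst y) \<and> snd y \<notin> AM.CC"
  unfolding Pw_def by simp

lemma Pw_Cons: "Pw (y # ys) \<longleftrightarrow> Pw [y] \<and> Pw ys \<and> (ys \<noteq> [] \<longrightarrow> fst y \<noteq> fst (hd ys))"
  using Pw_append[of "[y]" ys] by simp

lemma Pw_carrier: assumes "Pw gs" shows "\<forall>y\<in>set gs. snd y \<in> carrier W"
proof
  fix y assume "y \<in> set gs"
  then have "snd y \<in> AM.car (fst y)" using assms unfolding Pw_def by simp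
  then show "snd y \<in> carrier W" by (rule AM.car_carrier)
qed

lemma prodlC: "Pw gs \<Longrightarrow> AM.prodl gs \<in> carrier W"
  by (rule AM.prodl_carrier[OF Pw_carrier])

lemma prodl_Nil: "AM.prodl [] = \<one>" by (simp add: AM.prodl_def)

lemma prodl_append: "\<forall>y\<in>set gs. snd y \<in> carrier W \<Longrightarrow> \<forall>y\<in>set hs. snd y \<in> carrier W \<Longrightarrow>
    AM.prodl (gs @ hs) = AM.prodl gs \<otimes> AM.prodl hs"
proof (induction gs)
  case Nil
  have "AM.prodl hs \<in> carrier W" by (rule AM.prodl_carrier[OF Nil.prems(2)])
  then show ?case by (simp add: prodl_Nil)
next
  case (Cons y gs)
  have c: "snd y \<in> carrier W" "AM.prodl gs \<in> carrier W" "AM.prodl hs \<in> carrier W"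
    using Cons.prems AM.prodl_carrier by auto
  have "AM.prodl ((y # gs) @ hs) = snd y \<otimes> AM.prodl (gs @ hs)" by (simp add: AM.prodl_Cons)
  also have "\<dots> = snd y \<otimes> (AM.prodl gs \<otimes> AM.prodl hs)" using Cons by simp
  also have "\<dots> = AM.prodl (y # gs) \<otimes> AM.prodl hs" using c by (simp add: AM.prodl_Cons m_assoc)
  finally show ?case .
qed

lemma prodl_single: "snd y \<in> carrier W \<Longrightarrow> AM.prodl [y] = snd y"
  by (simp add: AM.prodl_Cons AM.prodl_def)

definition invl :: "(bool \<times> 'a) list \<Rightarrow> (bool \<times> 'a) list" where
  "invl gs = rev (map (\<lambda>y. (fst y, inv (snd y))) gs)"

lemma inv_notCC: "a \<in> carrier W \<Longrightarrow> a \<notin> AM.CC \<Longrightarrow> inv a \<notin> AM.CC"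
proof
  assume a: "a \<in> carrier W" "a \<notin> AM.CC" "inv a \<in> AM.CC"
  then have "inv a = \<one> \<or> inv a = g u" unfolding AM.CC_def by simp
  then have "a = \<one> \<or> a = g u"
  proof
    assume "inv a = \<one>"
    moreover have "a = inv (inv a)" using a(1) by simp
    ultimately show ?thesis by simp
  next
    assume "inv a = g u"
    moreover have "a = inv (inv a)" using a(1) by simp
    ultimately show ?thesis using ginv[OF uI] by simp
  qed
  then show False using a(2) unfolding AM.CC_def by simp
qed

lemma Pw_invl: assumes "Pw gs" shows "Pw (invl gs)"
proof -
  have s: "successively (\<lambda>a b. fst a \<noteq> fst b) gs" using assms unfolding Pw_def by simp
  have "successively (\<lambda>a b. fst a \<noteq> fst b) (invl gs)" unfolding invl_def successively_rev successively_map
    by (rule successively_mono[OF s]) simp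
  moreover have "\<forall>y\<in>set (invl gs). snd y \<in> AM.car (fst y) \<and> snd y \<notin> AM.CC"
  proof
    fix y assume "y \<in> set (invl gs)"
    then obtain z where z: "z \<in> set gs" "y = (fst z, inv (snd z))" unfolding invl_def by auto
    have "snd z \<in> AM.car (fst z)" "snd z \<notin> AM.CC" using z(1) assms unfolding Pw_def by auto
    then show "snd y \<in> AM.car (fst y) \<and> snd y \<notin> AM.CC"
      using z(2) AM.inv_car inv_notCC AM.car_carrier by simp
  qed
  ultimately show ?thesis unfolding Pw_def by simp
qed

lemma prodl_invl: "Pw gs \<Longrightarrow> AM.prodl (invl gs) = inv (AM.prodl gs)"
proof (induction gs)
  case Nil then show ?case by (simp add: invl_def AM.prodl_def)
next
  case (Cons y gs)
  have p1: "Pw gs" "Pw [y]" using Pw_Cons[THEN iffD1, OF Cons.prems] by auto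
  have p2: "snd y \<in> carrier W" using p1(2) unfolding Pw_single by (auto intro: AM.car_carrier)
  have pg: "AM.prodl gs \<in> carrier W" by (rule prodlC[OF p1(1)])
  have c1: "\<forall>z\<in>set (invl gs). snd z \<in> carrier W" by (rule Pw_carrier[OF Pw_invl[OF p1(1)]])
  have c2: "\<forall>z\<in>set [(fst y, inv (snd y))]. snd z \<in> carrier W" using p2 by simp
  have "invl (y # gs) = invl gs @ [(fst y, inv (snd y))]" by (simp add: invl_def)
  then have "AM.prodl (invl (y # gs)) = AM.prodl (invl gs) \<otimes> AM.prodl [(fst y, inv (snd y))]"
    using prodl_append[OF c1 c2] by simp
  also have "AM.prodl [(fst y, inv (snd y))] = inv (snd y)" using prodl_single p2 by simp
  also have "AM.prodl (invl gs) = inv (AM.prodl gs)" by (rule Cons.IH[OF p1(1)])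
  also have "inv (AM.prodl gs) \<otimes> inv (snd y) = inv (snd y \<otimes> AM.prodl gs)" using pg p2 by (simp add: inv_mult_group)
  finally show ?case by (simp add: AM.prodl_Cons)
qed

lemma hd_invl: "gs \<noteq> [] \<Longrightarrow> fst (hd (invl gs)) = fst (last gs)"
  unfolding invl_def by (simp add: hd_rev last_map)

definition x0 :: "bool \<times> (bool \<times> 'a) list" where "x0 = (False, [])"

lemma x0X: "x0 \<in> AM.XS" unfolding x0_def AM.XS_def AM.okl_def by simp
lemma eval_x0: "AM.evalX x0 = \<one>" unfolding x0_def AM.evalX_def AM.cpow_def AM.prodl_def by simp

lemma repr: assumes "x \<in> carrier W" shows "x \<in> AM.CC \<or> (\<exists>gs. gs \<noteq> [] \<and> Pw gs \<and> x = AM.prodl gs)"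
proof -
  obtain e xs where p: "PX x x0 = (e, xs)" by (cases "PX x x0")
  have ok: "AM.okl xs" using PX_closed[OF assms x0X] p unfolding AM.XS_def by simp
  have ev: "x = AM.cpow e \<otimes> AM.prodl xs"
    using eval_PX[OF assms x0X] eval_x0 p assms unfolding AM.evalX_def by simp
  show ?thesis
  proof (cases xs)
    case Nil then show ?thesis using ev AM.cpow_CC AM.cpow_C unfolding AM.prodl_def by simp
  next
    case (Cons y ys)
    have y: "snd y \<in> AM.car (fst y)" "snd y \<notin> AM.CC" "AM.okl ys" "ys \<noteq> [] \<longrightarrow> fst y \<noteq> fst (hd ys)"
      using ok Cons AM.okl_Cons by auto
    have yC: "snd y \<in> carrier W" using y(1) AM.car_carrier by blast
    let ?gs = "(fst y, AM.cpow e \<otimes> snd y) # ys"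
    have "Pw ?gs"
    proof (rule Pw_Cons[THEN iffD2], intro conjI)
      show "Pw [(fst y, AM.cpow e \<otimes> snd y)]" unfolding Pw_single
        using AM.mult_car[OF AM.cpow_car y(1)] AM.CC_mult_iff[OF AM.cpow_CC yC] y(2) by simp
      show "Pw ys" using y(3) unfolding Pw_def AM.okl_def by blast
      show "ys \<noteq> [] \<longrightarrow> fst (fst y, AM.cpow e \<otimes> snd y) \<noteq> fst (hd ys)" using y(4) by simp
    qed
    moreover have "x = AM.prodl ?gs"
      using ev Cons yC AM.cpow_C AM.prodl_carrier[OF AM.okl_carrier[OF y(3)]] by (simp add: AM.prodl_Cons m_assoc)
    ultimately show ?thesis by blast
  qed
qed

lemma grow: "gs \<noteq> [] \<Longrightarrow> Pw gs \<Longrightarrow> snd (PX (AM.prodl gs) x0) \<noteq> [] \<and> fst (hd (snd (PX (AM.prodl gs) x0))) = fst (hd gs)"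
proof (induction gs)
  case Nil then show ?case by simp
next
  case (Cons y gs)
  obtain t a where y: "y = (t, a)" by (cases y)
  have pw: "Pw [y]" "Pw gs" "gs \<noteq> [] \<longrightarrow> fst y \<noteq> fst (hd gs)" using Pw_Cons[THEN iffD1, OF Cons.prems(2)] by auto
  have a: "a \<in> AM.car t" "a \<notin> AM.CC" using pw(1) unfolding Pw_single y by auto
  have pC: "AM.prodl gs \<in> carrier W" by (rule prodlC[OF pw(2)])
  define p where "p = PX (AM.prodl gs) x0"
  have pX: "p \<in> AM.XS" unfolding p_def by (rule PX_closed[OF pC x0X])
  have pY: "snd p \<in> AM.Yt t"
  proof (cases "gs = []")
    case True
    then have "p = x0" unfolding p_def using X.Phi_one[OF x0X] by (simp add: AM.prodl_def)
    then show ?thesis unfolding AM.Yt_def x0_def AM.okl_def by simp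
  next
    case False
    then have "snd p \<noteq> [] \<and> fst (hd (snd p)) = fst (hd gs)" using Cons.IH pw(2) unfolding p_def by blast
    then show ?thesis using pX pw(3) False y unfolding AM.Yt_def AM.XS_def by simp
  qed
  have "PX (AM.prodl (y # gs)) x0 = PX a p" unfolding p_def y AM.prodl_Cons
    using PX_mult[OF AM.car_carrier[OF a(1)] pC x0X] by simp
  also have "\<dots> = AM.act t a (fst p, snd p)" using PX_car[OF a(1) pX] by simp
  also have "\<dots> = (AM.sg (a \<otimes> AM.cpow (fst p)), (t, AM.rep (a \<otimes> AM.cpow (fst p))) # snd p)"
    by (rule AM.act_grow[OF a pY])
  finally show ?case using y by simp
qed

lemma notCC: assumes "gs \<noteq> []" "Pw gs" shows "AM.prodl gs \<notin> AM.CC"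
proof
  assume h: "AM.prodl gs \<in> AM.CC"
  have g: "snd (PX (AM.prodl gs) x0) \<noteq> []" using grow[OF assms] by blast
  from h have "AM.prodl gs = \<one> \<or> AM.prodl gs = g u" unfolding AM.CC_def by simp
  then show False
  proof
    assume "AM.prodl gs = \<one>"
    then show False using g X.Phi_one[OF x0X] unfolding x0_def by simp
  next
    assume "AM.prodl gs = g u"
    then have "PX (AM.prodl gs) x0 = (True, [])" using PX_gu[OF x0X, of True] AM.act_c[OF x0X] unfolding x0_def by simp
    then show False using g by simp
  qed
qed

end


context stepctx begin

lemma IH': "Qprop (W\<lparr>carrier := Acar\<rparr>) (I - {v}) g" using IH unfolding Acar_def .

lemma invA: "h \<in> Acar \<Longrightarrow> inv\<^bsub>W\<lparr>carrier := Acar\<rparr>\<^esub> h = inv h"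
  by (rule m_inv_consistent[OF Asub])

lemma IH1: assumes "i \<in> I - {v}" "j \<in> I - {v}" shows "\<exists>h\<in>Acar. g j = h \<otimes> g i \<otimes> inv h"
proof -
  have "\<forall>i\<in>I - {v}. \<forall>j\<in>I - {v}. \<exists>h\<in>Acar. g j = h \<otimes> g i \<otimes> inv\<^bsub>W\<lparr>carrier := Acar\<rparr>\<^esub> h"
    using IH' unfolding Qprop_def by simp
  then obtain h where "h \<in> Acar" "g j = h \<otimes> g i \<otimes> inv\<^bsub>W\<lparr>carrier := Acar\<rparr>\<^esub> h" using assms by blast
  then show ?thesis using invA by auto
qed

lemma IH2: assumes "x \<in> Acar" "x \<otimes> g u = g u \<otimes> x" shows "x = \<one> \<or> x = g u"
proof -
  have "\<forall>i\<in>I - {v}. \<forall>x\<in>Acar. x \<otimes> g i = g i \<otimes> x \<longrightarrow> x = \<one> \<or> x = g i"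
    using IH' unfolding Qprop_def by simp
  then show ?thesis using assms uI uv by blast
qed

lemma IH3: assumes "w \<in> Acar" "w \<otimes> w = \<one>" "w \<noteq> \<one>"
  shows "\<exists>i\<in>I - {v}. \<exists>h\<in>Acar. w = h \<otimes> g i \<otimes> inv h"
proof -
  have "\<forall>w\<in>Acar. w \<otimes> w = \<one> \<longrightarrow> w \<noteq> \<one> \<longrightarrow>
        (\<exists>i\<in>I - {v}. \<exists>h\<in>Acar. w = h \<otimes> g i \<otimes> inv\<^bsub>W\<lparr>carrier := Acar\<rparr>\<^esub> h)"
    using IH' unfolding Qprop_def by simp
  then obtain i h where "i \<in> I - {v}" "h \<in> Acar" "w = h \<otimes> g i \<otimes> inv\<^bsub>W\<lparr>carrier := Acar\<rparr>\<^esub> h"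
    using assms by blast
  then show ?thesis using invA by auto
qed

lemma AsubC: "x \<in> Acar \<Longrightarrow> x \<in> carrier W"
  using subgroup.subset[OF Asub] by (rule subsetD)

lemma cent_car: assumes "a \<in> AM.car t" "a \<otimes> g u = g u \<otimes> a" shows "a \<in> AM.CC"
proof (cases t)
  case True
  then have "a \<in> Acar" using assms(1) carT by simp
  then show ?thesis using IH2 assms(2) unfolding AM.CC_def by blast
next
  case False
  then have "a \<in> D.Dset" using assms(1) carF by simp
  then show ?thesis using D.cent assms(2) unfolding AM.CC_def by blast
qed

lemma CC_rmult: assumes "a \<in> carrier W" "z \<in> AM.CC" "a \<otimes> z \<in> AM.CC" shows "a \<in> AM.CC"
proof -
  have cu: "g u \<in> carrier W" by (rule gC[OF uI])
  have "z = \<one> \<or> z = g u" using assms(2) unfolding AM.CC_def by simp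
  then show ?thesis
  proof
    assume "z = \<one>" then show ?thesis using assms by simp
  next
    assume z: "z = g u"
    have "a \<otimes> g u = \<one> \<or> a \<otimes> g u = g u" using assms(3) z unfolding AM.CC_def by simp
    moreover have "a = (a \<otimes> g u) \<otimes> g u" using assms(1) cu gg[OF uI] by (simp add: m_assoc)
    ultimately have "a = g u \<or> a = \<one>" using cu gg[OF uI] by auto
    then show ?thesis unfolding AM.CC_def by auto
  qed
qed

lemma centW: assumes "x \<in> carrier W" "x \<otimes> g u = g u \<otimes> x" shows "x \<in> AM.CC"
proof (rule ccontr)
  assume nx: "x \<notin> AM.CC"
  then obtain gs where gs: "gs \<noteq> []" "Pw gs" "x = AM.prodl gs" using repr[OF assms(1)] by blast
  obtain gs' y where gy: "gs = gs' @ [y]" using gs(1) by (cases gs rule: rev_cases) auto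
  obtain t a where y: "y = (t, a)" by (cases y)
  have pw: "Pw gs'" "Pw [(t,a)]" "gs' \<noteq> [] \<longrightarrow> fst (last gs') \<noteq> t"
    using Pw_append[THEN iffD1, OF gs(2)[unfolded gy y]] by auto
  have a: "a \<in> AM.car t" "a \<notin> AM.CC" using pw(2) unfolding Pw_single by auto
  have aC: "a \<in> carrier W" by (rule AM.car_carrier[OF a(1)])
  have cu: "g u \<in> carrier W" by (rule gC[OF uI])
  define z where "z = a \<otimes> g u \<otimes> inv a"
  have zC: "z \<in> carrier W" unfolding z_def using aC cu by simp
  have zcar: "z \<in> AM.car t" unfolding z_def using AM.mult_car AM.inv_car AM.c_car a(1) by blast
  have znot: "z \<notin> AM.CC"
  proof
    assume "z \<in> AM.CC"
    then have "z = \<one> \<or> z = g u" unfolding AM.CC_def by simp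
    then show False
    proof
      assume "z = \<one>" then have "g u = \<one>" unfolding z_def using conj_one_iff[OF aC cu] by simp
      then show False using gu1 by simp
    next
      assume zu: "z = g u"
      have "a \<otimes> g u = z \<otimes> a" unfolding z_def using aC cu by (simp add: m_assoc)
      then have "a \<otimes> g u = g u \<otimes> a" using zu by simp
      then have "a \<in> AM.CC" by (rule cent_car[OF a(1)])
      then show False using a(2) by simp
    qed
  qed
  define L where "L = (gs' @ [(t, z)]) @ invl gs'"
  have pwz: "Pw [(t, z)]" unfolding Pw_single using zcar znot by simp
  have pw1: "Pw (gs' @ [(t, z)])" using Pw_append[THEN iffD2] pw(1) pwz pw(3) by simp
  have pwL: "Pw L" unfolding L_def
  proof (rule Pw_append[THEN iffD2], intro conjI impI)
    show "Pw (gs' @ [(t, z)])" by (rule pw1)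
    show "Pw (invl gs')" by (rule Pw_invl[OF pw(1)])
    assume "invl gs' \<noteq> []"
    then have "gs' \<noteq> []" unfolding invl_def by auto
    then show "fst (last (gs' @ [(t, z)])) \<noteq> fst (hd (invl gs'))" using hd_invl pw(3) by simp
  qed
  have Lne: "L \<noteq> []" unfolding L_def by simp
  have Pc: "AM.prodl gs' \<in> carrier W" by (rule prodlC[OF pw(1)])
  have xe: "x = AM.prodl gs' \<otimes> a"
    using gs(3) gy y prodl_append[OF Pw_carrier[OF pw(1)], of "[(t,a)]"] prodl_single aC by simp
  have "AM.prodl L = AM.prodl gs' \<otimes> z \<otimes> inv (AM.prodl gs')"
    unfolding L_def using prodl_append[OF Pw_carrier[OF pw1] Pw_carrier[OF Pw_invl[OF pw(1)]]]
      prodl_append[OF Pw_carrier[OF pw(1)], of "[(t,z)]"] prodl_single zC prodl_invl[OF pw(1)] by simp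
  also have "\<dots> = x \<otimes> g u \<otimes> inv x" unfolding z_def xe using conj_comp[OF Pc aC cu] by simp
  also have "\<dots> = g u \<otimes> x \<otimes> inv x" using assms(2) by simp
  also have "\<dots> = g u" using assms(1) cu by (simp add: m_assoc)
  finally have "AM.prodl L \<in> AM.CC" unfolding AM.CC_def by simp
  then show False using notCC[OF Lne pwL] by simp
qed

end


context stepctx begin

lemma invol_gs:
  "\<forall>gs. length gs = N \<longrightarrow> gs \<noteq> [] \<longrightarrow> Pw gs \<longrightarrow> AM.prodl gs \<otimes> AM.prodl gs = \<one> \<longrightarrow>
     (\<exists>h\<in>carrier W. \<exists>t. \<exists>a\<in>AM.car t. AM.prodl gs = h \<otimes> a \<otimes> inv h)"
proof (induction N rule: less_induct)
  case (less N)
  show ?case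
  proof (intro allI impI)
    fix gs assume len: "length gs = N" and ne: "gs \<noteq> []" and pw: "Pw gs" and sq: "AM.prodl gs \<otimes> AM.prodl gs = \<one>"
    obtain y gs1 where g1: "gs = y # gs1" using ne by (cases gs) auto
    have pw1: "Pw [y]" "Pw gs1" "gs1 \<noteq> [] \<longrightarrow> fst y \<noteq> fst (hd gs1)"
      using Pw_Cons[THEN iffD1, OF pw[unfolded g1]] by auto
    have yC: "snd y \<in> carrier W" "snd y \<in> AM.car (fst y)" "snd y \<notin> AM.CC"
      using pw1(1) unfolding Pw_single by (auto intro: AM.car_carrier)
    show "\<exists>h\<in>carrier W. \<exists>t. \<exists>a\<in>AM.car t. AM.prodl gs = h \<otimes> a \<otimes> inv h"
    proof (cases "gs1 = []")
      case True
      then have "AM.prodl gs = \<one> \<otimes> snd y \<otimes> inv \<one>" using g1 prodl_single yC by simp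
      then show ?thesis using yC(2) by blast
    next
      case False
      obtain mid y2 where g2: "gs1 = mid @ [y2]" using False by (cases gs1 rule: rev_cases) auto
      have pw2: "Pw mid" "Pw [y2]" "mid \<noteq> [] \<longrightarrow> fst (last mid) \<noteq> fst y2"
        using Pw_append[THEN iffD1, OF pw1(2)[unfolded g2]] by auto
      have y2C: "snd y2 \<in> carrier W" "snd y2 \<in> AM.car (fst y2)" "snd y2 \<notin> AM.CC"
        using pw2(2) unfolding Pw_single by (auto intro: AM.car_carrier)
      have MC: "AM.prodl mid \<in> carrier W" by (rule prodlC[OF pw2(1)])
      define x where "x = AM.prodl gs"
      have xC: "x \<in> carrier W" unfolding x_def by (rule prodlC[OF pw])
      have xe: "x = snd y \<otimes> (AM.prodl mid \<otimes> snd y2)"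
        unfolding x_def g1 g2 AM.prodl_Cons using prodl_append[OF Pw_carrier[OF pw2(1)], of "[y2]"] prodl_single y2C
        by simp
      show ?thesis
      proof (cases "fst y = fst y2")
        case False
        have "Pw (gs @ gs)"
        proof (rule Pw_append[THEN iffD2], intro conjI impI)
          show "Pw gs" by (rule pw)
          show "Pw gs" by (rule pw)
          show "fst (last gs) \<noteq> fst (hd gs)" using False g1 g2 by simp
        qed
        moreover have "AM.prodl (gs @ gs) = \<one>" using prodl_append[OF Pw_carrier[OF pw] Pw_carrier[OF pw]] sq by simp
        ultimately show ?thesis using notCC[of "gs @ gs"] ne unfolding AM.CC_def by simp
      next
        case True
        define t where "t = fst y"
        define a where "a = snd y"
        define b where "b = snd y2"
        have aC: "a \<in> carrier W" "a \<in> AM.car t" "a \<notin> AM.CC" using yC unfolding a_def t_def by auto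
        have bC: "b \<in> carrier W" "b \<in> AM.car t" "b \<notin> AM.CC" using y2C True unfolding b_def t_def by auto
        have midne: "mid \<noteq> []"
        proof
          assume "mid = []"
          then show False using pw1(3) g2 True by simp
        qed
        define x' where "x' = AM.prodl mid \<otimes> (b \<otimes> a)"
        have x'C: "x' \<in> carrier W" unfolding x'_def using MC aC bC by simp
        have x'e: "x' = inv a \<otimes> x \<otimes> a"
          unfolding x'_def xe a_def b_def using yC y2C MC by (simp add: m_assoc cancel1)
        have xx': "x = a \<otimes> x' \<otimes> inv a"
          using conj_solve[OF inv_closed[OF aC(1)] xC, of x'] x'e aC by simp
        have sq': "x' \<otimes> x' = \<one>"
        proof -
          have "x' \<otimes> x' = inv a \<otimes> (x \<otimes> x) \<otimes> inv (inv a)"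
            using conj_sq[OF inv_closed[OF aC(1)] xC] x'e aC by simp
          then show ?thesis using sq unfolding x_def using aC by simp
        qed
        have fin: "\<exists>h\<in>carrier W. \<exists>t. \<exists>a\<in>AM.car t. x = h \<otimes> a \<otimes> inv h"
          if gs2: "length gs2 < N" "gs2 \<noteq> []" "Pw gs2" "AM.prodl gs2 = x'" for gs2
        proof -
          obtain h t' a' where h: "h \<in> carrier W" "a' \<in> AM.car t'" "x' = h \<otimes> a' \<otimes> inv h"
            using less.IH[OF gs2(1)] gs2 sq' by blast
          have a'C: "a' \<in> carrier W" by (rule AM.car_carrier[OF h(2)])
          have "x = (a \<otimes> h) \<otimes> a' \<otimes> inv (a \<otimes> h)"
            using xx' h(3) conj_comp[OF aC(1) h(1) a'C] by simp
          moreover have "a \<otimes> h \<in> carrier W" using aC h by simp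
          ultimately show ?thesis using h(2) by blast
        qed
        show ?thesis
        proof (cases "b \<otimes> a \<in> AM.CC")
          case False
          define gs2 where "gs2 = mid @ [(t, b \<otimes> a)]"
          have "Pw gs2" unfolding gs2_def
          proof (rule Pw_append[THEN iffD2], intro conjI impI)
            show "Pw mid" by (rule pw2(1))
            show "Pw [(t, b \<otimes> a)]" unfolding Pw_single using AM.mult_car bC aC False by simp
            show "fst (last mid) \<noteq> fst (hd [(t, b \<otimes> a)])" using pw2(3) midne True unfolding t_def by simp
          qed
          moreover have "length gs2 < N" unfolding gs2_def using len g1 g2 by simp
          moreover have "AM.prodl gs2 = x'" unfolding gs2_def x'_def
            using prodl_append[OF Pw_carrier[OF pw2(1)], of "[(t, b \<otimes> a)]"] prodl_single aC bC by simp
          moreover have "gs2 \<noteq> []" unfolding gs2_def by simp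
          ultimately have "\<exists>h\<in>carrier W. \<exists>t. \<exists>a\<in>AM.car t. x = h \<otimes> a \<otimes> inv h" using fin by blast
          then show ?thesis unfolding x_def .
        next
          case True2: True
          obtain mid' y3 where g3: "mid = mid' @ [y3]" using midne by (cases mid rule: rev_cases) auto
          have pw3: "Pw mid'" "Pw [y3]" "mid' \<noteq> [] \<longrightarrow> fst (last mid') \<noteq> fst y3"
            using Pw_append[THEN iffD1, OF pw2(1)[unfolded g3]] by auto
          have y3C: "snd y3 \<in> carrier W" "snd y3 \<in> AM.car (fst y3)" "snd y3 \<notin> AM.CC"
            using pw3(2) unfolding Pw_single by (auto intro: AM.car_carrier)
          define z where "z = snd y3 \<otimes> (b \<otimes> a)"
          have baC: "b \<otimes> a \<in> carrier W" using aC bC by simp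
          have zcar: "z \<in> AM.car (fst y3)" unfolding z_def
            using AM.mult_car[OF y3C(2) AM.CC_car[OF True2]] .
          have znot: "z \<notin> AM.CC" unfolding z_def using CC_rmult[OF y3C(1) True2] y3C(3) by blast
          define gs2 where "gs2 = mid' @ [(fst y3, z)]"
          have "Pw gs2" unfolding gs2_def
          proof (rule Pw_append[THEN iffD2], intro conjI impI)
            show "Pw mid'" by (rule pw3(1))
            show "Pw [(fst y3, z)]" unfolding Pw_single using zcar znot by simp
            show "fst (last mid') \<noteq> fst (hd [(fst y3, z)])" if "mid' \<noteq> []" using pw3(3) that by simp
          qed
          moreover have "length gs2 < N" unfolding gs2_def using len g1 g2 g3 by simp
          moreover have "AM.prodl gs2 = x'"
          proof -
            have M'C: "AM.prodl mid' \<in> carrier W" by (rule prodlC[OF pw3(1)])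
            have "AM.prodl gs2 = AM.prodl mid' \<otimes> z" unfolding gs2_def
              using prodl_append[OF Pw_carrier[OF pw3(1)], of "[(fst y3, z)]"] prodl_single
                AM.car_carrier[OF zcar] by simp
            moreover have "AM.prodl mid = AM.prodl mid' \<otimes> snd y3" unfolding g3
              using prodl_append[OF Pw_carrier[OF pw3(1)], of "[y3]"] prodl_single y3C by simp
            ultimately show ?thesis unfolding x'_def z_def using M'C y3C baC by (simp add: m_assoc)
          qed
          moreover have "gs2 \<noteq> []" unfolding gs2_def by simp
          ultimately have "\<exists>h\<in>carrier W. \<exists>t. \<exists>a\<in>AM.car t. x = h \<otimes> a \<otimes> inv h" using fin by blast
          then show ?thesis unfolding x_def .
        qed
      qed
    qed
  qed
qed

lemma invol_conj: assumes "w \<in> carrier W" "w \<otimes> w = \<one>" "w \<noteq> \<one>"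
  shows "\<exists>i\<in>I. \<exists>h\<in>carrier W. w = h \<otimes> g i \<otimes> inv h"
proof -
  have cu: "g u \<in> carrier W" by (rule gC[OF uI])
  from repr[OF assms(1)] show ?thesis
  proof
    assume "w \<in> AM.CC"
    then have "w = g u" using assms(3) unfolding AM.CC_def by simp
    then have "w = \<one> \<otimes> g u \<otimes> inv \<one>" using cu by simp
    then show ?thesis using uI by blast
  next
    assume "\<exists>gs. gs \<noteq> [] \<and> Pw gs \<and> w = AM.prodl gs"
    then obtain gs where gs: "gs \<noteq> []" "Pw gs" "w = AM.prodl gs" by blast
    obtain h t a where h: "h \<in> carrier W" "a \<in> AM.car t" "w = h \<otimes> a \<otimes> inv h"
      using invol_gs gs assms(2) by blast
    have aC: "a \<in> carrier W" by (rule AM.car_carrier[OF h(2)])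
    have aa: "a \<otimes> a = \<one>"
    proof -
      have "h \<otimes> (a \<otimes> a) \<otimes> inv h = \<one>" using conj_sq[OF h(1) aC] h(3) assms(2) by simp
      then show ?thesis using conj_one_iff[OF h(1)] aC by simp
    qed
    have a1: "a \<noteq> \<one>" using h(3) assms(3) h(1) by auto
    show ?thesis
    proof (cases t)
      case True
      then have "a \<in> Acar" using h(2) carT by simp
      then obtain i h' where i: "i \<in> I - {v}" "h' \<in> Acar" "a = h' \<otimes> g i \<otimes> inv h'" using IH3 aa a1 by blast
      have h'C: "h' \<in> carrier W" by (rule AsubC[OF i(2)])
      have "w = (h \<otimes> h') \<otimes> g i \<otimes> inv (h \<otimes> h')" using h(3) i(3) conj_comp[OF h(1) h'C gC] i(1) by simp
      moreover have "h \<otimes> h' \<in> carrier W" using h(1) h'C by simp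
      ultimately show ?thesis using i(1) by blast
    next
      case False
      then have "a \<in> D.Dset" using h(2) carF by simp
      then obtain h' where h': "h' \<in> carrier W" "a = h' \<otimes> g u \<otimes> inv h'" using D.invol aa a1 by blast
      have "w = (h \<otimes> h') \<otimes> g u \<otimes> inv (h \<otimes> h')" using h(3) h'(2) conj_comp[OF h(1) h'(1) cu] by simp
      moreover have "h \<otimes> h' \<in> carrier W" using h(1) h'(1) by simp
      ultimately show ?thesis using uI by blast
    qed
  qed
qed

lemma gen_conj: assumes "i \<in> I" shows "\<exists>h\<in>carrier W. g i = h \<otimes> g u \<otimes> inv h"
proof (cases "i = v")
  case True
  have "g v \<in> D.Dset" by (rule D.t_D)
  then show ?thesis using D.invol gg[OF vI] gv1 True by blast
next
  case False
  then obtain h where "h \<in> Acar" "g i = h \<otimes> g u \<otimes> inv h" using IH1[of u i] uI uv assms by auto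
  then show ?thesis using AsubC by blast
qed

theorem step_Q: "Qprop W I g"
proof -
  have cu: "g u \<in> carrier W" by (rule gC[OF uI])
  have Q1: "\<forall>i\<in>I. \<forall>j\<in>I. \<exists>h\<in>carrier W. g j = h \<otimes> g i \<otimes> inv h"
  proof (intro ballI)
    fix i j assume ij: "i \<in> I" "j \<in> I"
    obtain hi where hi: "hi \<in> carrier W" "g i = hi \<otimes> g u \<otimes> inv hi" using gen_conj[OF ij(1)] by blast
    obtain hj where hj: "hj \<in> carrier W" "g j = hj \<otimes> g u \<otimes> inv hj" using gen_conj[OF ij(2)] by blast
    have "g u = inv hi \<otimes> g i \<otimes> hi" using conj_solve[OF hi(1) cu hi(2)] .
    then have "g u = inv hi \<otimes> g i \<otimes> inv (inv hi)" using hi(1) by simp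
    then have "g j = (hj \<otimes> inv hi) \<otimes> g i \<otimes> inv (hj \<otimes> inv hi)"
      using hj(2) conj_comp[OF hj(1) inv_closed[OF hi(1)] gC[OF ij(1)]] by simp
    moreover have "hj \<otimes> inv hi \<in> carrier W" using hi(1) hj(1) by simp
    ultimately show "\<exists>h\<in>carrier W. g j = h \<otimes> g i \<otimes> inv h" by blast
  qed
  have Q2: "\<forall>i\<in>I. \<forall>x\<in>carrier W. x \<otimes> g i = g i \<otimes> x \<longrightarrow> x = \<one> \<or> x = g i"
  proof (intro ballI impI)
    fix i x assume i: "i \<in> I" and x: "x \<in> carrier W" and cx: "x \<otimes> g i = g i \<otimes> x"
    obtain h where h: "h \<in> carrier W" "g i = h \<otimes> g u \<otimes> inv h" using gen_conj[OF i] by blast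
    define y where "y = inv h \<otimes> x \<otimes> h"
    have yC: "y \<in> carrier W" unfolding y_def using h(1) x by simp
    have "y \<otimes> g u = g u \<otimes> y" unfolding y_def by (rule conj_comm[OF h(1) x cu]) (use cx h(2) in simp)
    then have "y \<in> AM.CC" by (rule centW[OF yC])
    then have "y = \<one> \<or> y = g u" unfolding AM.CC_def by simp
    moreover have "x = h \<otimes> y \<otimes> inv h" unfolding y_def by (rule conj_back[OF h(1) x])
    ultimately show "x = \<one> \<or> x = g i" using h yC by auto
  qed
  have Q3: "\<forall>w\<in>carrier W. w \<otimes> w = \<one> \<longrightarrow> w \<noteq> \<one> \<longrightarrow> (\<exists>i\<in>I. \<exists>h\<in>carrier W. w = h \<otimes> g i \<otimes> inv h)"
    using invol_conj by blast
  show ?thesis unfolding Qprop_def using Q1 Q2 Q3 by blast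
qed

end


lemma base_Q:
  assumes pres: "has_presentation W {i} g (relI {i} m)" and mat: "matI {i} m"
  shows "Qprop W {i} g"
proof -
  interpret group W by (rule hp_group[OF pres])
  have gi: "g i \<in> carrier W" using hp_gen[OF pres] by simp
  have gg: "g i \<otimes>\<^bsub>W\<^esub> g i = \<one>\<^bsub>W\<^esub>" using cox_inv[OF pres mat] by simp
  have ginv: "inv\<^bsub>W\<^esub> (g i) = g i" using gg gi inv_char by blast
  have ev: "word_eval W g w \<in> {\<one>\<^bsub>W\<^esub>, g i}" if "set w \<subseteq> {i} \<times> UNIV" for w
    using that
  proof (induction w)
    case Nil then show ?case by simp
  next
    case (Cons x w)
    then have "fst x = i" "word_eval W g w \<in> {\<one>\<^bsub>W\<^esub>, g i}" by auto
    then show ?case using ginv gi gg by auto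
  qed
  have car: "carrier W \<subseteq> {\<one>\<^bsub>W\<^esub>, g i}" using hp_carrier[OF pres] ev by auto
  show ?thesis unfolding Qprop_def
  proof (intro conjI ballI impI)
    fix a b assume "a \<in> {i}" "b \<in> {i}"
    then show "\<exists>h\<in>carrier W. g b = h \<otimes>\<^bsub>W\<^esub> g a \<otimes>\<^bsub>W\<^esub> inv\<^bsub>W\<^esub> h" using gi by (intro bexI[of _ "\<one>\<^bsub>W\<^esub>"]) auto
  next
    fix a x assume "a \<in> {i}" "x \<in> carrier W"
    then show "x = \<one>\<^bsub>W\<^esub> \<or> x = g a" using car by auto
  next
    fix w assume "w \<in> carrier W" "w \<noteq> \<one>\<^bsub>W\<^esub>"
    then have "w = g i" using car by auto
    then show "\<exists>a\<in>{i}. \<exists>h\<in>carrier W. w = h \<otimes>\<^bsub>W\<^esub> g a \<otimes>\<^bsub>W\<^esub> inv\<^bsub>W\<^esub> h" using gi by (intro bexI[of _ i] bexI[of _ "\<one>\<^bsub>W\<^esub>"]) auto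
  qed
qed

lemma mainQ_aux:
  "\<forall>I (W :: ('a,'b) monoid_scheme). finite I \<longrightarrow> card I = N \<longrightarrow> I \<noteq> {} \<longrightarrow> has_presentation W I g (relI I m) \<longrightarrow>
     matI I m \<longrightarrow> oddI I m \<longrightarrow> connI I m \<longrightarrow> \<not> cycI I m \<longrightarrow> Qprop W I g"
proof (induction N rule: less_induct)
  case (less N)
  show ?case
  proof (intro allI impI)
    fix I and W :: "('a,'b) monoid_scheme"
    assume fin: "finite I" and cI: "card I = N" and ne: "I \<noteq> {}" and pres: "has_presentation W I g (relI I m)"
      and mat: "matI I m" and odd: "oddI I m" and conn: "connI I m" and nc: "\<not> cycI I m"
    show "Qprop W I g"
    proof (cases "card I = 1")
      case True
      then obtain i where i: "I = {i}" by (auto simp: card_Suc_eq)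
      show ?thesis using base_Q pres mat unfolding i by blast
    next
      case False
      then have c2: "card I \<ge> 2" using ne fin by (cases "card I") (auto simp: card_eq_0_iff)
      obtain v u where vu: "v \<in> I" "u \<in> I" "u \<noteq> v" "m v u < \<infinity>" and leaf: "\<forall>j\<in>I. j \<noteq> v \<longrightarrow> j \<noteq> u \<longrightarrow> m v j = \<infinity>"
        using leaf_exists[OF fin c2 conn nc mat] by blast
      obtain k where mvu: "m v u = enat k" using vu(4) by (cases "m v u") auto
      have "\<forall>i\<in>I. \<forall>j\<in>I. i \<noteq> j \<longrightarrow> m i j = \<infinity> \<or> (\<exists>k. m i j = enat k \<and> odd k)" using odd unfolding oddI_def .
      then have kodd: "odd k" using vu mvu by fastforce
      have "\<forall>i\<in>I. \<forall>j\<in>I. i \<noteq> j \<longrightarrow> m i j \<ge> 2" using mat unfolding matI_def by (elim conjE)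
      then have "m v u \<ge> 2" using vu by auto
      then have "k \<ge> 2" using mvu by (simp add: numeral_eq_enat)
      then have k3: "k \<ge> 3" using kodd by presburger
      let ?J = "I - {v}"
      let ?A = "W\<lparr>carrier := word_eval W g ` {w. set w \<subseteq> ?J \<times> UNIV}\<rparr>"
      have presA: "has_presentation ?A ?J g (relI ?J m)" by (rule restrict_pres[OF pres mat vu(1) vu(2) vu(3) leaf])
      have uniq: "\<forall>j. adjI I m v j \<longrightarrow> j = u" using leaf unfolding adjI_def by auto
      have "Qprop ?A ?J g"
      proof -
        have "card ?J < N" using cI fin vu(1) by (simp add: card_Diff_singleton) (use c2 in linarith)
        moreover have "?J \<noteq> {}" using vu by blast
        moreover have "finite ?J" using fin by simp
        moreover have "connI ?J m" by (rule conn_restrict[OF conn mat vu(1) uniq])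
        moreover have "\<not> cycI ?J m" by (rule cyc_restrict[OF nc]) auto
        moreover have "matI ?J m" by (rule mat_restrict[OF mat]) auto
        moreover have "oddI ?J m" by (rule odd_restrict[OF odd]) auto
        ultimately show ?thesis using less.IH presA by blast
      qed
      then have "stepctx W I g m v u k"
        by (intro stepctx.intro) (use pres mat vu mvu kodd k3 leaf in auto)
      then show ?thesis by (rule stepctx.step_Q)
    qed
  qed
qed

lemma mainQ: "finite I \<Longrightarrow> I \<noteq> {} \<Longrightarrow> has_presentation W I g (relI I m) \<Longrightarrow>
     matI I m \<Longrightarrow> oddI I m \<Longrightarrow> connI I m \<Longrightarrow> \<not> cycI I m \<Longrightarrow> Qprop W I g"
  using mainQ_aux by blast


context group begin

lemma gen_invol:
  assumes "w \<in> carrier G" "w \<otimes> w = \<one>"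
  shows "generate G {w} = {\<one>, w}"
proof
  have iw: "inv w = w" by (rule inv_char[OF assms(1) assms(1) assms(2) assms(2)])
  show "generate G {w} \<subseteq> {\<one>, w}"
  proof
    fix x assume "x \<in> generate G {w}"
    then show "x \<in> {\<one>, w}"
    proof (induction rule: generate.induct)
      case one then show ?case by simp
    next
      case (incl h) then show ?case by simp
    next
      case (inv h) then show ?case using iw by simp
    next
      case (eng h1 h2)
      have a: "h1 = \<one> \<or> h1 = w" "h2 = \<one> \<or> h2 = w" using eng.IH by auto
      show ?case
      proof (cases "h1 = \<one>")
        case True then show ?thesis using a(2) assms(1) by auto
      next
        case False then have "h1 = w" using a(1) by simp
        then show ?thesis using a(2) assms by auto
      qed
    qed
  qed
  have "\<one> \<in> generate G {w}" by (rule generate.one)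
  moreover have "w \<in> generate G {w}" by (rule generate.incl) simp
  ultimately show "{\<one>, w} \<subseteq> generate G {w}" by simp
qed

lemma final_cent:
  assumes h: "h \<in> carrier G" and gi: "gi \<in> carrier G" and wh: "w = h \<otimes> gi \<otimes> inv h"
    and Q2: "\<And>x. x \<in> carrier G \<Longrightarrow> x \<otimes> gi = gi \<otimes> x \<Longrightarrow> x = \<one> \<or> x = gi"
    and ww: "w \<otimes> w = \<one>" and wC: "w \<in> carrier G"
  shows "centraliser G w = generate G {w}"
proof -
  have "centraliser G w = {\<one>, w}"
  proof
    show "centraliser G w \<subseteq> {\<one>, w}"
    proof
      fix x assume "x \<in> centraliser G w"
      then have x: "x \<in> carrier G" "x \<otimes> w = w \<otimes> x" unfolding centraliser_def by auto
      define y where "y = inv h \<otimes> x \<otimes> h"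
      have yC: "y \<in> carrier G" unfolding y_def using h x(1) by simp
      have "y \<otimes> gi = gi \<otimes> y" unfolding y_def by (rule conj_comm[OF h x(1) gi]) (use x(2) wh in simp)
      then have "y = \<one> \<or> y = gi" by (rule Q2[OF yC])
      moreover have "x = h \<otimes> y \<otimes> inv h" unfolding y_def by (rule conj_back[OF h x(1)])
      ultimately show "x \<in> {\<one>, w}" using h yC wh by auto
    qed
    show "{\<one>, w} \<subseteq> centraliser G w" unfolding centraliser_def using wC by auto
  qed
  also have "\<dots> = generate G {w}" using gen_invol[OF wC ww] by simp
  finally show ?thesis .
qed

end

theorem lemma2p7:
  fixes W :: "('a, 'b) monoid_scheme" and n :: nat and g :: "nat \<Rightarrow> 'a"
    and m :: "nat \<Rightarrow> nat \<Rightarrow> enat" and w :: 'a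
  assumes "coxeter_system W n g m"
    and "odd_coxeter n m"
    and "cox_connected n m"
    and "n \<ge> 2"
    and "cox_tree n m"
    and "w \<in> carrier W" and "w \<noteq> \<one>\<^bsub>W\<^esub>" and "w \<otimes>\<^bsub>W\<^esub> w = \<one>\<^bsub>W\<^esub>"
  shows "centraliser W w = generate W {w}"
proof -
  have e1: "coxeter_relators n m = relI {1..n} m" unfolding coxeter_relators_def relI_def by blast
  have e2: "coxeter_matrix n m = matI {1..n} m" unfolding coxeter_matrix_def matI_def by auto
  have e3: "odd_coxeter n m = oddI {1..n} m" unfolding odd_coxeter_def oddI_def by auto
  have adj: "cox_adj n m = adjI {1..n} m" unfolding cox_adj_def adjI_def by auto
  have e4: "cox_connected n m = connI {1..n} m" unfolding cox_connected_def connI_def adj by auto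
  have e5: "cox_has_cycle n m = cycI {1..n} m" unfolding cox_has_cycle_def cycI_def adj by auto
  have pres: "has_presentation W {1..n} g (relI {1..n} m)"
    using assms(1) unfolding coxeter_system_def e1 by (elim conjE)
  have mat: "matI {1..n} m" using assms(1) unfolding coxeter_system_def e2 by (elim conjE)
  have odd: "oddI {1..n} m" using assms(2) unfolding e3 .
  have conn: "connI {1..n} m" using assms(3) unfolding e4 .
  have nc: "\<not> cycI {1..n} m" using assms(5) unfolding cox_tree_def e5 by (elim conjE)
  have ne: "{1..n} \<noteq> {}" using assms(4) by simp
  have Q: "Qprop W {1..n} g" by (rule mainQ[OF _ ne pres mat odd conn nc]) simp
  have Q2a: "\<forall>i\<in>{1..n}. \<forall>x\<in>carrier W. x \<otimes>\<^bsub>W\<^esub> g i = g i \<otimes>\<^bsub>W\<^esub> x \<longrightarrow> x = \<one>\<^bsub>W\<^esub> \<or> x = g i"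
    using Q unfolding Qprop_def by (elim conjE)
  have Q3: "\<forall>w\<in>carrier W. w \<otimes>\<^bsub>W\<^esub> w = \<one>\<^bsub>W\<^esub> \<longrightarrow> w \<noteq> \<one>\<^bsub>W\<^esub> \<longrightarrow>
        (\<exists>i\<in>{1..n}. \<exists>h\<in>carrier W. w = h \<otimes>\<^bsub>W\<^esub> g i \<otimes>\<^bsub>W\<^esub> inv\<^bsub>W\<^esub> h)"
    using Q unfolding Qprop_def by (elim conjE)
  have "\<exists>i\<in>{1..n}. \<exists>h\<in>carrier W. w = h \<otimes>\<^bsub>W\<^esub> g i \<otimes>\<^bsub>W\<^esub> inv\<^bsub>W\<^esub> h"
    using Q3 assms(6) assms(7) assms(8) by blast
  then obtain i h where ih: "i \<in> {1..n}" "h \<in> carrier W" "w = h \<otimes>\<^bsub>W\<^esub> g i \<otimes>\<^bsub>W\<^esub> inv\<^bsub>W\<^esub> h"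
    by blast
  have gi: "g i \<in> carrier W" by (rule hp_gen[OF pres ih(1)])
  have Q2: "\<And>x. x \<in> carrier W \<Longrightarrow> x \<otimes>\<^bsub>W\<^esub> g i = g i \<otimes>\<^bsub>W\<^esub> x \<Longrightarrow> x = \<one>\<^bsub>W\<^esub> \<or> x = g i"
    using Q2a ih(1) by blast
  show ?thesis by (rule group.final_cent[OF hp_group[OF pres] ih(2) gi ih(3) Q2 assms(8) assms(6)])
qed


end
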